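(* Let $k,n\in\mathbb{N}$. There exist a column dimension $m=\Theta(n)$, a reference matrix $W_0\in\mathbb{R}^{k\times m}$, a convex and $1$-Lipschitz loss function $\ell:\mathbb{R}^k\to\mathbb{R}$, and a distribution $\mathcal{D}$ over vectors $x\in\mathbb{R}^m$ with $\|x\|\le 1$, such that in the vector-valued prediction problem parameterized by $W_0,\mathcal{D},\ell$, with constant probability over the draw of the training set $S\sim\mathcal{D}^n$ there exists an empirical risk minimizer $\widehat{W}_*$ satisfying $$L(\widehat{W}_* )-L(W^* )=\widetilde{\Omega}\big(\sqrt{k/n}\big).$$
   Context: Vector-valued prediction (VVP) problem: given a distribution $\mathcal{D}$ over $x\in\mathbb{R}^m$ with $\|x\|\le1$, a loss $\ell:\mathbb{R}^k\to\mathbb{R}$, and a reference matrix $W_0\in\mathbb{R}^{k\times m}$, the hypothesis set is the Frobenius ball $\{W\in\mathbb{R}^{k\times m}:\|W-W_0\|_F\le1\}$. The population risk is $L(W)=\mathbb{E}_{x\sim\mathcal{D}}[\ell(Wx)]$, and for a sample $S=\{x_1,\dots,x_n\}$ drawn i.i.d. from $\mathcal{D}$ the empirical risk is $\widehat{L}(W)=\frac1n\sum_{i=1}^n\ell(Wx_i)$. $W^*$ denotes a minimizer of $L$ over the Frobenius ball, and an empirical risk minimizer (ERM) $\widehat{W}_*$ is any minimizer of $\widehat{L}$ over the Frobenius ball. $\widetilde{\Omega}$ hides logarithmic factors. *)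

theory Defs
  imports "HOL-Probability.Probability"
begin

text \<open>Vectors in R^d are represented as functions nat => real vanishing at indices >= d;
  k x m matrices as functions nat => nat => real vanishing outside {..<k} x {..<m}.\<close>

definition vecs :: "nat \<Rightarrow> (nat \<Rightarrow> real) set" where
  "vecs d = {x. \<forall>j\<ge>d. x j = 0}"

definition mats :: "nat \<Rightarrow> nat \<Rightarrow> (nat \<Rightarrow> nat \<Rightarrow> real) set" where
  "mats k m = {W. \<forall>i j. (k \<le> i \<or> m \<le> j) \<longrightarrow> W i j = 0}"

definition enorm :: "nat \<Rightarrow> (nat \<Rightarrow> real) \<Rightarrow> real" where
  "enorm d x = sqrt (\<Sum>j<d. (x j)^2)"

definition frob_dist :: "nat \<Rightarrow> nat \<Rightarrow> (nat \<Rightarrow> nat \<Rightarrow> real) \<Rightarrow> (nat \<Rightarrow> nat \<Rightarrow> real) \<Rightarrow> real" where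
  "frob_dist k m W V = sqrt (\<Sum>i<k. \<Sum>j<m. (W i j - V i j)^2)"

definition mv :: "nat \<Rightarrow> nat \<Rightarrow> (nat \<Rightarrow> nat \<Rightarrow> real) \<Rightarrow> (nat \<Rightarrow> real) \<Rightarrow> (nat \<Rightarrow> real)" where
  "mv k m W x = (\<lambda>i. if i < k then (\<Sum>j<m. W i j * x j) else 0)"

definition hyp_ball :: "nat \<Rightarrow> nat \<Rightarrow> (nat \<Rightarrow> nat \<Rightarrow> real) \<Rightarrow> (nat \<Rightarrow> nat \<Rightarrow> real) set" where
  "hyp_ball k m W0 = {W \<in> mats k m. frob_dist k m W W0 \<le> 1}"

definition convex_loss :: "nat \<Rightarrow> ((nat \<Rightarrow> real) \<Rightarrow> real) \<Rightarrow> bool" where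
  "convex_loss k l \<longleftrightarrow> (\<forall>u\<in>vecs k. \<forall>v\<in>vecs k. \<forall>t::real. 0 \<le> t \<and> t \<le> 1 \<longrightarrow>
      l (\<lambda>i. t * u i + (1 - t) * v i) \<le> t * l u + (1 - t) * l v)"

definition lipschitz1_loss :: "nat \<Rightarrow> ((nat \<Rightarrow> real) \<Rightarrow> real) \<Rightarrow> bool" where
  "lipschitz1_loss k l \<longleftrightarrow> (\<forall>u\<in>vecs k. \<forall>v\<in>vecs k. \<bar>l u - l v\<bar> \<le> enorm k (\<lambda>i. u i - v i))"

definition pop_risk :: "nat \<Rightarrow> nat \<Rightarrow> ((nat \<Rightarrow> real) \<Rightarrow> real) \<Rightarrow> (nat \<Rightarrow> real) measure
    \<Rightarrow> (nat \<Rightarrow> nat \<Rightarrow> real) \<Rightarrow> real" where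
  "pop_risk k m l D W = (\<integral>x. l (mv k m W x) \<partial>D)"

definition emp_risk :: "nat \<Rightarrow> nat \<Rightarrow> ((nat \<Rightarrow> real) \<Rightarrow> real) \<Rightarrow> nat \<Rightarrow> (nat \<Rightarrow> (nat \<Rightarrow> real))
    \<Rightarrow> (nat \<Rightarrow> nat \<Rightarrow> real) \<Rightarrow> real" where
  "emp_risk k m l n S W = (\<Sum>i<n. l (mv k m W (S i))) / real n"

end

theory Submission
  imports Defs "HOL-Library.FuncSet"
begin


definition sd :: "'a set \<Rightarrow> 'a set \<Rightarrow> 'a set" where
  "sd u v = (u - v) \<union> (v - u)"

lemma half_subsets:
  assumes "finite M"
  shows "2 ^ card M \<le> 2 * card {c. c \<subseteq> M \<and> card M \<le> 2 * card c}"
proof -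
  define Big where "Big = {c. c \<subseteq> M \<and> card M \<le> 2 * card c}"
  define Small where "Small = {c. c \<subseteq> M \<and> 2 * card c < card M}"
  have fB: "finite Big" "finite Small" using assms unfolding Big_def Small_def by auto
  have un: "Pow M = Big \<union> Small" unfolding Big_def Small_def by auto
  have dj: "Big \<inter> Small = {}" unfolding Big_def Small_def by auto
  have "card (Pow M) = card Big + card Small"
    using card_Un_disjoint[OF fB dj] un by simp
  then have eq: "2 ^ card M = card Big + card Small" using card_Pow[of M] assms by simp
  have "inj_on (\<lambda>c. M - c) Small" unfolding Small_def inj_on_def by blast
  moreover have "(\<lambda>c. M - c) ` Small \<subseteq> Big"
  proof
    fix d assume "d \<in> (\<lambda>c. M - c) ` Small"
    then obtain c where c: "c \<in> Small" "d = M - c" by auto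
    then have "c \<subseteq> M" "2 * card c < card M" unfolding Small_def by auto
    then have "card d = card M - card c" using c(2) assms by (simp add: card_Diff_subset finite_subset)
    then show "d \<in> Big" using \<open>2 * card c < card M\<close> c(2) unfolding Big_def by auto
  qed
  ultimately have "card Small \<le> card Big"
    using card_inj_on_le fB by blast
  then show ?thesis using eq unfolding Big_def by simp
qed

lemma ball_card:
  assumes "u \<subseteq> {..<h}"
  shows "card {v \<in> Pow {..<(h::nat)}. 4 * card (sd u v) \<le> h} = card {w \<in> Pow {..<h}. 4 * card w \<le> h}"
proof (rule bij_betw_same_card)
  show "bij_betw (sd u) {v \<in> Pow {..<h}. 4 * card (sd u v) \<le> h} {w \<in> Pow {..<h}. 4 * card w \<le> h}"
  proof (rule bij_betw_byWitness[where f' = "sd u"])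
    show "\<forall>a\<in>{v \<in> Pow {..<h}. 4 * card (sd u v) \<le> h}. sd u (sd u a) = a"
      unfolding sd_def by auto
    show "\<forall>a'\<in>{w \<in> Pow {..<h}. 4 * card w \<le> h}. sd u (sd u a') = a'"
      unfolding sd_def by auto
    show "sd u ` {v \<in> Pow {..<h}. 4 * card (sd u v) \<le> h} \<subseteq> {w \<in> Pow {..<h}. 4 * card w \<le> h}"
      using assms unfolding sd_def by auto
    show "sd u ` {w \<in> Pow {..<h}. 4 * card w \<le> h} \<subseteq> {v \<in> Pow {..<h}. 4 * card (sd u v) \<le> h}"
    proof
      fix x assume "x \<in> sd u ` {w \<in> Pow {..<h}. 4 * card w \<le> h}"
      then obtain w where w: "w \<in> Pow {..<h}" "4 * card w \<le> h" "x = sd u w" by auto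
      have "sd u x = w" using w(3) unfolding sd_def by auto
      then show "x \<in> {v \<in> Pow {..<h}. 4 * card (sd u v) \<le> h}"
        using w assms unfolding sd_def by auto
    qed
  qed
qed

lemma small_card:
  "card {w \<in> Pow {..<(h::nat)}. card w \<le> a} = (\<Sum>i\<le>a. h choose i)"
proof (induction a)
  case 0
  have "{w \<in> Pow {..<h}. card w \<le> 0} = {{}}"
  proof (intro equalityI subsetI)
    fix w assume "w \<in> {w \<in> Pow {..<h}. card w \<le> 0}"
    then have "w \<subseteq> {..<h}" "card w = 0" by auto
    then have "finite w" using finite_subset by blast
    then show "w \<in> {{}}" using \<open>card w = 0\<close> by simp
  qed auto
  then show ?case by simp
next
  case (Suc a)
  have un: "{w \<in> Pow {..<h}. card w \<le> Suc a} = {w \<in> Pow {..<h}. card w \<le> a} \<union> {w. w \<subseteq> {..<h} \<and> card w = Suc a}"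
    by auto
  have "card ({w \<in> Pow {..<h}. card w \<le> a} \<union> {w. w \<subseteq> {..<h} \<and> card w = Suc a})
      = card {w \<in> Pow {..<h}. card w \<le> a} + card {w. w \<subseteq> {..<h} \<and> card w = Suc a}"
    by (rule card_Un_disjoint) auto
  then show ?case using Suc un n_subsets[of "{..<h}" "Suc a"] by simp
qed

lemma binom_tail:
  "real (\<Sum>i\<le>a. h choose i) \<le> 3 ^ a * (4/3) ^ h"
proof -
  define g where "g i = real (h choose i) * (1/3) ^ i" for i
  have "real (\<Sum>i\<le>a. h choose i) = (\<Sum>i\<le>a. real (h choose i))" by simp
  also have "\<dots> \<le> (\<Sum>i\<le>a. 3 ^ a * g i)"
  proof (rule sum_mono)
    fix i assume "i \<in> {..a}"
    then have "i \<le> a" by simp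
    have "(1::real) \<le> 3 ^ a * (1/3) ^ i"
    proof -
      have "(3::real) ^ a = 3 ^ i * 3 ^ (a - i)" using \<open>i \<le> a\<close> by (simp add: power_add[symmetric])
      then have "3 ^ a * (1/3::real) ^ i = 3 ^ (a - i)" by (simp add: power_one_over)
      then show ?thesis by simp
    qed
    then show "real (h choose i) \<le> 3 ^ a * g i" unfolding g_def
      by (metis mult.assoc mult.commute mult_le_cancel_left1 of_nat_0_le_iff mult_left_mono linorder_not_le order_less_le_trans)
  qed
  also have "\<dots> = 3 ^ a * (\<Sum>i\<le>a. g i)" by (simp add: sum_distrib_left)
  also have "(\<Sum>i\<le>a. g i) \<le> (\<Sum>i\<le>h. g i)"
  proof -
    have "(\<Sum>i\<le>a. g i) = (\<Sum>i\<in>{..min a h}. g i)"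
      by (rule sum.mono_neutral_right) (auto simp: g_def)
    also have "\<dots> \<le> (\<Sum>i\<le>h. g i)"
      by (rule sum_mono2) (auto simp: g_def)
    finally show ?thesis .
  qed
  also have "(\<Sum>i\<le>h. g i) = (1/3 + 1) ^ h"
    unfolding g_def using binomial_ring[of "1/3::real" 1 h] by (simp add: mult.commute)
  finally show ?thesis by (simp add: mult_left_mono)
qed

lemma real_ineq1:
  fixes h :: nat
  assumes "64 \<le> h"
  shows "(16::real) ^ (h div 64) * 3 ^ (h div 4) * (4/3) ^ h \<le> 2 ^ h / 4"
proof -
  define a where "a = h div 4"
  define q where "q = h div 64"
  have qa: "q = a div 16" unfolding q_def a_def by (simp add: div_mult2_eq[symmetric])
  have q1: "1 \<le> q" using assms unfolding q_def by simp
  have a16: "16 * q \<le> a" unfolding qa by simp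
  have h4: "4 * a \<le> h" unfolding a_def by simp
  have e1: "(4/3::real) ^ h = 2 ^ h * (2/3) ^ h" by (simp add: power_mult_distrib[symmetric])
  have e2: "(2/3::real) ^ h \<le> (2/3) ^ (4 * a)" using h4 by (rule power_decreasing) auto
  have e3: "(2/3::real) ^ (4 * a) = ((2/3) ^ 4) ^ a" by (rule power_mult)
  have e4: "(3::real) ^ a * ((2/3) ^ 4) ^ a = (48/81) ^ a"
  proof -
    have "(3 * (2/3) ^ 4 :: real) ^ a = 3 ^ a * ((2/3) ^ 4) ^ a" by (rule power_mult_distrib)
    moreover have "(3 * (2/3) ^ 4 :: real) = 48/81" by (simp add: power_divide)
    ultimately show ?thesis by simp
  qed
  have e5: "(48/81::real) ^ a \<le> (48/81) ^ (16 * q)" using a16 by (rule power_decreasing) auto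
  have e6: "(48/81::real) ^ (16 * q) = ((48/81) ^ 16) ^ q" by (metis power_mult mult.commute)
  have e7: "(16::real) ^ q * ((48/81) ^ 16) ^ q = (16 * (48/81) ^ 16) ^ q"
    by (simp only: power_mult_distrib)
  have e8: "(16 * (48/81::real) ^ 16) ^ q \<le> (1/4) ^ q" by (rule power_mono) (simp_all add: power_divide)
  have e9: "(1/4::real) ^ q \<le> 1/4" using power_decreasing[OF q1, of "1/4::real"] by simp
  have "(16::real) ^ q * 3 ^ a * (2/3) ^ h \<le> 16 ^ q * 3 ^ a * (2/3) ^ (4 * a)"
    using e2 by (simp add: mult_left_mono)
  also have "\<dots> = 16 ^ q * (48/81) ^ a" using e3 e4 by (simp add: mult.assoc)
  also have "\<dots> \<le> 16 ^ q * (48/81) ^ (16 * q)" using e5 by (simp add: mult_left_mono)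
  also have "\<dots> \<le> 1/4" using e6 e7 e8 e9 by simp
  finally have "(16::real) ^ q * 3 ^ a * (2/3) ^ h \<le> 1/4" .
  then have "2 ^ h * ((16::real) ^ q * 3 ^ a * (2/3) ^ h) \<le> 2 ^ h * (1/4)"
    by (simp add: mult_left_mono)
  then show ?thesis unfolding a_def[symmetric] q_def[symmetric] e1
    by (simp add: algebra_simps)
qed

lemma pow2_big: "11 \<le> q \<Longrightarrow> 64 * q + 64 \<le> (2::nat) ^ (q - 1)"
proof (induction q rule: dec_induct)
  case base then show ?case by simp
next
  case (step q)
  then have "2 ^ (Suc q - 1) = 2 * (2::nat) ^ (q - 1)"
    by (cases q) auto
  then show ?case using step by simp
qed

lemma one_minus_pow:
  fixes M :: nat
  assumes "1 \<le> M"
  shows "(1 - 1 / real M) ^ M \<le> 1/2"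
proof -
  have "1 - 1 / real M \<le> exp (- (1 / real M))" using exp_ge_add_one_self[of "- (1 / real M)"] by simp
  moreover have "0 \<le> 1 - 1 / real M" using assms by (simp add: field_simps)
  ultimately have "(1 - 1 / real M) ^ M \<le> exp (- (1 / real M)) ^ M" by (rule power_mono)
  also have "\<dots> = exp (- 1)" using assms by (simp add: exp_of_nat_mult[symmetric])
  also have "exp (-1::real) \<le> 1/2"
  proof -
    have "2 \<le> exp (1::real)" using exp_ge_add_one_self[of 1] by simp
    then show ?thesis by (simp add: exp_minus field_simps)
  qed
  finally show ?thesis .
qed

lemma real_ineq2:
  fixes h q :: nat
  assumes "11 \<le> q" "h \<le> 64 * q + 63"
  shows "(2::real) ^ h * (1 - 1 / 2 ^ (q + 1)) ^ (4 ^ q) \<le> 1/2"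
proof -
  define M :: nat where "M = 2 ^ (q + 1)"
  have M1: "1 \<le> M" unfolding M_def by simp
  have "(4::nat) ^ q = M * 2 ^ (q - 1)"
  proof -
    have "(4::nat) ^ q = 2 ^ (2 * q)" by (simp add: power_mult)
    also have "2 * q = (q + 1) + (q - 1)" using assms by simp
    finally show ?thesis unfolding M_def by (simp add: power_add)
  qed
  then have "(1 - 1 / 2 ^ (q + 1) :: real) ^ (4 ^ q) = ((1 - 1 / real M) ^ M) ^ (2 ^ (q - 1))"
    unfolding M_def by (simp add: power_mult)
  also have "\<dots> \<le> (1/2) ^ (2 ^ (q - 1))"
    by (rule power_mono[OF one_minus_pow[OF M1]]) (simp add: M_def)
  also have "(1/2::real) ^ (2 ^ (q - 1)) \<le> (1/2) ^ (h + 1)"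
    by (rule power_decreasing) (use pow2_big[OF assms(1)] assms(2) in auto)
  finally have "(1 - 1 / 2 ^ (q + 1) :: real) ^ (4 ^ q) \<le> (1/2) ^ (h + 1)" .
  then have "(2::real) ^ h * (1 - 1 / 2 ^ (q + 1)) ^ (4 ^ q) \<le> 2 ^ h * (1/2) ^ (h + 1)"
    by (simp add: mult_left_mono)
  also have "\<dots> = 1/2" by (simp add: power_one_over)
  finally show ?thesis .
qed



lemma card_S1:
  fixes U :: "'a set" and N a b :: nat
  assumes "a < N" "b < N" "a \<noteq> b" "finite U" "finite Bl"
  shows "card (PiE {..<N} (\<lambda>i. if i = a then {u} else if i = b then Bl else U)) = card Bl * card U ^ (N - 2)"
proof -
  define g where "g i = card (if i = a then {u} else if i = b then Bl else U)" for i
  have "card (PiE {..<N} (\<lambda>i. if i = a then {u} else if i = b then Bl else U)) = (\<Prod>i\<in>{..<N}. g i)"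
    unfolding g_def by (rule card_PiE) simp
  also have "\<dots> = g a * (\<Prod>i\<in>{..<N} - {a}. g i)" using assms by (simp add: prod.remove)
  also have "(\<Prod>i\<in>{..<N} - {a}. g i) = g b * (\<Prod>i\<in>{..<N} - {a} - {b}. g i)"
    using assms by (simp add: prod.remove)
  also have "(\<Prod>i\<in>{..<N} - {a} - {b}. g i) = (\<Prod>i\<in>{..<N} - {a} - {b}. card U)"
    by (rule prod.cong) (auto simp: g_def)
  also have "\<dots> = card U ^ (N - 2)"
  proof -
    have "card ({..<N} - {a} - {b}) = N - 2" using assms by (simp add: card_Diff_subset)
    then show ?thesis by simp
  qed
  finally show ?thesis using assms by (simp add: g_def)
qed

lemma code_exists:
  fixes h :: nat
  assumes h: "704 \<le> h"
  shows "\<exists>C. C \<subseteq> Pow {..<h} \<and> C \<noteq> {} \<and>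
     (\<forall>c\<in>C. \<forall>c'\<in>C. c \<noteq> c' \<longrightarrow> h + 1 \<le> 4 * card (sd c c')) \<and>
     (\<forall>Z. Z \<subseteq> {..<h} \<and> card Z \<le> h div 64 \<longrightarrow> (\<exists>c\<in>C. c \<inter> Z = {} \<and> h \<le> 4 * card c))"
proof -
  define q where "q = h div 64"
  have q11: "11 \<le> q" using h unfolding q_def by (simp add: div_le_mono[of 704 h 64, simplified])
  have hq: "h \<le> 64 * q + 63" unfolding q_def by simp
  have qh: "2 * q \<le> h" unfolding q_def by simp
  define N :: nat where "N = 4 ^ q"
  have N2: "2 \<le> N"
  proof -
    have "(4::nat) ^ 1 \<le> 4 ^ q" using q11 by (intro power_increasing) auto
    then show ?thesis unfolding N_def by simp
  qed
  define U :: "nat set set" where "U = Pow {..<h}"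
  have finU: "finite U" and cardU: "card U = 2 ^ h" unfolding U_def by (auto simp: card_Pow)
  define F where "F = PiE {..<N} (\<lambda>_. U)"
  have finF: "finite F" unfolding F_def using finU by (simp add: finite_PiE)
  have cardF: "card F = (2 ^ h) ^ N" unfolding F_def using finU cardU by (simp add: card_PiE)
  define Bl where "Bl u = {v \<in> U. 4 * card (sd u v) \<le> h}" for u
  define B where "B = (\<Sum>i\<le>h div 4. h choose i)"
  have cardBl: "card (Bl u) = B" if "u \<in> U" for u
  proof -
    have "card (Bl u) = card {w \<in> Pow {..<h}. 4 * card w \<le> h}"
      unfolding Bl_def U_def using ball_card[of u h] that unfolding U_def by simp
    also have "{w \<in> Pow {..<h}. 4 * card w \<le> h} = {w \<in> Pow {..<h}. card w \<le> h div 4}" by auto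
    finally show ?thesis unfolding B_def using small_card by simp
  qed
  have finBl: "finite (Bl u)" for u unfolding Bl_def using finU by simp
  define Bad1 where "Bad1 = {f \<in> F. \<exists>a<N. \<exists>b<N. a \<noteq> b \<and> 4 * card (sd (f a) (f b)) \<le> h}"
  define S1 where "S1 a b u = PiE {..<N} (\<lambda>i. if i = a then {u} else if i = b then Bl u else U)" for a b u
  have sub1: "Bad1 \<subseteq> (\<Union>a\<in>{..<N}. \<Union>b\<in>{..<N} - {a}. \<Union>u\<in>U. S1 a b u)"
  proof
    fix f assume "f \<in> Bad1"
    then obtain a b where ab: "f \<in> F" "a < N" "b < N" "a \<noteq> b" "4 * card (sd (f a) (f b)) \<le> h"
      unfolding Bad1_def by blast
    have fU: "\<And>i. i < N \<Longrightarrow> f i \<in> U" using ab(1) unfolding F_def by auto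
    have "f \<in> S1 a b (f a)" unfolding S1_def
      using ab fU F_def by (auto simp: PiE_iff Bl_def)
    then show "f \<in> (\<Union>a\<in>{..<N}. \<Union>b\<in>{..<N} - {a}. \<Union>u\<in>U. S1 a b u)"
      using ab fU by blast
  qed
  have "card Bad1 \<le> card (\<Union>a\<in>{..<N}. \<Union>b\<in>{..<N} - {a}. \<Union>u\<in>U. S1 a b u)"
    by (rule card_mono[OF _ sub1]) (simp add: S1_def finU finBl finite_PiE)
  also have "\<dots> \<le> (\<Sum>a\<in>{..<N}. card (\<Union>b\<in>{..<N} - {a}. \<Union>u\<in>U. S1 a b u))"
    by (rule card_UN_le) simp
  also have "\<dots> \<le> (\<Sum>a\<in>{..<N}. \<Sum>b\<in>{..<N} - {a}. card (\<Union>u\<in>U. S1 a b u))"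
    by (rule sum_mono, rule card_UN_le) simp
  also have "\<dots> \<le> (\<Sum>a\<in>{..<N}. \<Sum>b\<in>{..<N} - {a}. \<Sum>u\<in>U. card (S1 a b u))"
    by (rule sum_mono, rule sum_mono, rule card_UN_le) (simp add: finU)
  also have "\<dots> = (\<Sum>a\<in>{..<N}. \<Sum>b\<in>{..<N} - {a}. \<Sum>u\<in>U. B * (2 ^ h) ^ (N - 2))"
    by (intro sum.cong refl) (simp add: S1_def card_S1 finU finBl cardBl cardU)
  also have "\<dots> = N * (N - 1) * (2 ^ h * (B * (2 ^ h) ^ (N - 2)))"
    by (simp add: cardU)
  finally have c1: "card Bad1 \<le> N * (N - 1) * (2 ^ h * (B * (2 ^ h) ^ (N - 2)))" .
  have r1: "real (card Bad1) \<le> real ((2 ^ h) ^ N) / 4"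
  proof -
    have "N * (N - 1) * (2 ^ h * (B * (2 ^ h) ^ (N - 2))) \<le> N * N * (2 ^ h * (B * (2 ^ h) ^ (N - 2)))"
      by (intro mult_right_mono mult_left_mono) auto
    then have "card Bad1 \<le> N * N * (2 ^ h * (B * (2 ^ h) ^ (N - 2)))" using c1 by linarith
    then have "real (card Bad1) \<le> real (N * N * (2 ^ h * (B * (2 ^ h) ^ (N - 2))))"
      by (simp only: of_nat_le_iff)
    also have "\<dots> = real N * real N * (2 ^ h * (real B * (2 ^ h) ^ (N - 2)))" by simp
    also have "real N * real N = 16 ^ q"
    proof -
      have "(16::real) ^ q = (4 * 4) ^ q" by simp
      also have "\<dots> = 4 ^ q * 4 ^ q" by (rule power_mult_distrib)
      finally have "(16::real) ^ q = 4 ^ q * 4 ^ q" .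
      moreover have "real N = 4 ^ q" unfolding N_def by simp
      ultimately show ?thesis by simp
    qed
    finally have s1: "real (card Bad1) \<le> 16 ^ q * (2 ^ h * (real B * (2 ^ h) ^ (N - 2)))" .
    have bB: "real B \<le> 3 ^ (h div 4) * (4/3) ^ h" unfolding B_def by (rule binom_tail)
    have s2: "16 ^ q * (2 ^ h * (real B * (2 ^ h) ^ (N - 2))) \<le> 16 ^ q * (2 ^ h * (3 ^ (h div 4) * (4/3) ^ h * (2 ^ h) ^ (N - 2)))"
      using bB by (intro mult_left_mono mult_right_mono) auto
    have s3: "(16::real) ^ q * (2 ^ h * (3 ^ (h div 4) * (4/3) ^ h * (2 ^ h) ^ (N - 2))) = (16 ^ q * 3 ^ (h div 4) * (4/3) ^ h) * (2 ^ h * (2 ^ h) ^ (N - 2))"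
      by (simp add: algebra_simps)
    have s4: "(16 ^ q * 3 ^ (h div 4) * (4/3) ^ h) * (2 ^ h * (2 ^ h) ^ (N - 2)) \<le> ((2::real) ^ h / 4) * (2 ^ h * (2 ^ h) ^ (N - 2))"
      by (rule mult_right_mono) (use real_ineq1[of h] h q_def in auto)
    have s5: "((2::real) ^ h / 4) * (2 ^ h * (2 ^ h) ^ (N - 2)) = real ((2 ^ h) ^ N) / 4"
    proof -
      have "((2::real) ^ h) ^ N = (2 ^ h) ^ (2 + (N - 2))" by (simp only: le_add_diff_inverse[OF N2])
      also have "\<dots> = (2 ^ h) ^ 2 * (2 ^ h) ^ (N - 2)" by (rule power_add)
      finally have "(2::real) ^ h * (2 ^ h * (2 ^ h) ^ (N - 2)) = (2 ^ h) ^ N"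
        by (simp add: power2_eq_square)
      then show ?thesis by simp
    qed
    show ?thesis using s1 s2 s3 s4 s5 by linarith
  qed
  define Good where "Good Z = {c \<in> U. c \<inter> Z = {} \<and> h \<le> 4 * card c}" for Z
  define Zs where "Zs = {Z \<in> U. card Z \<le> q}"
  define Bad2 where "Bad2 = {f \<in> F. \<exists>Z\<in>Zs. \<forall>a<N. f a \<notin> Good Z}"
  have goodcard: "2 ^ h \<le> 2 ^ (q + 1) * card (Good Z)" if "Z \<in> Zs" for Z
  proof -
    define M where "M = {..<h} - Z"
    have Zsub: "Z \<subseteq> {..<h}" "card Z \<le> q" using that unfolding Zs_def U_def by auto
    have finZ: "finite Z" using Zsub finite_subset by blast
    have cM: "card M = h - card Z" unfolding M_def using Zsub finZ by (simp add: card_Diff_subset)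
    have "{c. c \<subseteq> M \<and> card M \<le> 2 * card c} \<subseteq> Good Z"
    proof
      fix c assume c: "c \<in> {c. c \<subseteq> M \<and> card M \<le> 2 * card c}"
      then have "h \<le> 4 * card c" using cM Zsub qh by auto
      moreover have "c \<subseteq> {..<h}" "c \<inter> Z = {}" using c unfolding M_def by auto
      ultimately show "c \<in> Good Z" unfolding Good_def U_def by auto
    qed
    then have "card {c. c \<subseteq> M \<and> card M \<le> 2 * card c} \<le> card (Good Z)"
      by (rule card_mono[rotated]) (simp add: Good_def finU)
    moreover have "2 ^ card M \<le> 2 * card {c. c \<subseteq> M \<and> card M \<le> 2 * card c}"
      by (rule half_subsets) (simp add: M_def)
    moreover have "h \<le> card M + q" using cM Zsub by simp
    then have "(2::nat) ^ h \<le> 2 ^ (card M + q)" by (intro power_increasing) auto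
    then have "(2::nat) ^ h \<le> 2 ^ card M * 2 ^ q" by (simp add: power_add)
    ultimately show ?thesis
    proof -
      assume a1: "card {c. c \<subseteq> M \<and> card M \<le> 2 * card c} \<le> card (Good Z)"
        and a2: "2 ^ card M \<le> 2 * card {c. c \<subseteq> M \<and> card M \<le> 2 * card c}"
        and a3: "(2::nat) ^ h \<le> 2 ^ card M * 2 ^ q"
      have b1: "(2::nat) ^ card M \<le> 2 * card (Good Z)" using a1 a2 by linarith
      have b2: "(2::nat) ^ card M * 2 ^ q \<le> (2 * card (Good Z)) * 2 ^ q"
        using b1 by (rule mult_le_mono1)
      have b3: "(2 * card (Good Z)) * 2 ^ q = 2 ^ (q + 1) * card (Good Z)"
        by (simp add: power_add)
      show ?thesis using order.trans[OF a3 b2] b3 by simp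
    qed
  qed
  have sub2: "Bad2 \<subseteq> (\<Union>Z\<in>Zs. PiE {..<N} (\<lambda>_. U - Good Z))"
    unfolding Bad2_def F_def by (auto simp: PiE_iff) (metis lessThan_iff)
  have finZs: "finite Zs" unfolding Zs_def using finU by simp
  have cardZs: "card Zs \<le> 2 ^ h" unfolding Zs_def using cardU finU
    by (metis (no_types, lifting) card_mono mem_Collect_eq subsetI)
  have "card Bad2 \<le> card (\<Union>Z\<in>Zs. PiE {..<N} (\<lambda>_. U - Good Z))"
    by (rule card_mono[OF _ sub2]) (simp add: finZs finU finite_PiE)
  also have "\<dots> \<le> (\<Sum>Z\<in>Zs. card (PiE {..<N} (\<lambda>_. U - Good Z)))"
    by (rule card_UN_le) (simp add: finZs)
  also have "\<dots> = (\<Sum>Z\<in>Zs. (card U - card (Good Z)) ^ N)"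
    by (intro sum.cong refl) (simp add: card_PiE finU Good_def card_Diff_subset)
  finally have c2: "card Bad2 \<le> (\<Sum>Z\<in>Zs. (card U - card (Good Z)) ^ N)" .
  have r2: "real (card Bad2) \<le> real ((2 ^ h) ^ N) / 2"
  proof -
    have each: "real ((card U - card (Good Z)) ^ N) \<le> (2 ^ h * (1 - 1 / 2 ^ (q + 1))) ^ N" if "Z \<in> Zs" for Z
    proof -
      have le: "card (Good Z) \<le> card U" by (rule card_mono) (auto simp: finU Good_def)
      have "real (card U - card (Good Z)) = 2 ^ h - real (card (Good Z))" using le cardU by (simp add: of_nat_diff)
      also have "\<dots> \<le> 2 ^ h * (1 - 1 / 2 ^ (q + 1))"
      proof -
        have "real (2 ^ h) \<le> real (2 ^ (q + 1) * card (Good Z))"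
          using goodcard[OF that] by (simp only: of_nat_le_iff)
        then have "(2::real) ^ h \<le> 2 ^ (q + 1) * real (card (Good Z))" by simp
        then show ?thesis by (simp add: field_simps)
      qed
      finally show ?thesis by (simp add: power_mono)
    qed
    have "real (card Bad2) \<le> real (\<Sum>Z\<in>Zs. (card U - card (Good Z)) ^ N)"
      using c2 by (simp only: of_nat_le_iff)
    also have "\<dots> = (\<Sum>Z\<in>Zs. real ((card U - card (Good Z)) ^ N))"
      by (rule of_nat_sum)
    also have "\<dots> \<le> (\<Sum>Z\<in>Zs. (2 ^ h * (1 - 1 / 2 ^ (q + 1))) ^ N)"
      by (rule sum_mono) (rule each)
    also have "\<dots> = real (card Zs) * ((2 ^ h) ^ N * (1 - 1 / 2 ^ (q + 1)) ^ N)"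
      by (simp add: power_mult_distrib)
    also have "\<dots> \<le> 2 ^ h * ((2 ^ h) ^ N * (1 - 1 / 2 ^ (q + 1)) ^ N)"
    proof (rule mult_right_mono)
      have "real (card Zs) \<le> real (2 ^ h)" using cardZs by (simp only: of_nat_le_iff)
      then show "real (card Zs) \<le> 2 ^ h" by simp
      have "1 \<le> (2::real) ^ (q + 1)" by (rule one_le_power) simp
      then have "1 / (2::real) ^ (q + 1) \<le> 1" by simp
      then have "0 \<le> 1 - 1 / (2::real) ^ (q + 1)" by linarith
      then show "0 \<le> ((2::real) ^ h) ^ N * (1 - 1 / 2 ^ (q + 1)) ^ N" by simp
    qed
    also have "\<dots> = (2 ^ h) ^ N * (2 ^ h * (1 - 1 / 2 ^ (q + 1)) ^ N)" by simp
    also have "\<dots> \<le> (2 ^ h) ^ N * (1/2)"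
      by (rule mult_left_mono) (use real_ineq2[OF q11 hq] N_def in auto)
    finally show ?thesis by simp
  qed
  have "card (Bad1 \<union> Bad2) < card F"
  proof -
    have "real (card (Bad1 \<union> Bad2)) \<le> real (card Bad1) + real (card Bad2)"
      using card_Un_le[of Bad1 Bad2] by linarith
    also have "\<dots> < real (card F)"
    proof -
      have e: "real ((2 ^ h) ^ N) = ((2::real) ^ h) ^ N" "real (card F) = ((2::real) ^ h) ^ N"
        using cardF by simp_all
      have "(0::real) < (2 ^ h) ^ N" by simp
      then show ?thesis using r1 r2 e by linarith
    qed
    finally show ?thesis by simp
  qed
  moreover have sub: "Bad1 \<union> Bad2 \<subseteq> F" unfolding Bad1_def Bad2_def by auto
  ultimately have "Bad1 \<union> Bad2 \<noteq> F" by auto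
  then obtain f where f: "f \<in> F" "f \<notin> Bad1" "f \<notin> Bad2" using sub by blast
  define C where "C = f ` {..<N}"
  show ?thesis
  proof (intro exI[of _ C] conjI allI impI ballI)
    show "C \<subseteq> Pow {..<h}" using f(1) unfolding C_def F_def U_def by auto
    have "0 \<in> {..<N}" using N2 by simp
    then show "C \<noteq> {}" unfolding C_def by blast
  next
    fix c c' assume "c \<in> C" "c' \<in> C" "c \<noteq> c'"
    then obtain a b where "a < N" "b < N" "c = f a" "c' = f b" unfolding C_def by auto
    then have "a \<noteq> b" using \<open>c \<noteq> c'\<close> by auto
    then have "\<not> 4 * card (sd (f a) (f b)) \<le> h" using f(1,2) \<open>a < N\<close> \<open>b < N\<close> unfolding Bad1_def by blast
    then show "h + 1 \<le> 4 * card (sd c c')" using \<open>c = f a\<close> \<open>c' = f b\<close> by simp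
  next
    fix Z assume Z: "Z \<subseteq> {..<h} \<and> card Z \<le> h div 64"
    then have "Z \<in> Zs" unfolding Zs_def U_def q_def by auto
    then obtain a where "a < N" "f a \<in> Good Z" using f(1,3) unfolding Bad2_def by auto
    then show "\<exists>c\<in>C. c \<inter> Z = {} \<and> h \<le> 4 * card c" unfolding C_def Good_def by auto
  qed
qed





definition ip :: "nat \<Rightarrow> (nat \<Rightarrow> real) \<Rightarrow> (nat \<Rightarrow> real) \<Rightarrow> real" where
  "ip k u v = (\<Sum>i<k. u i * v i)"

definition lossf :: "nat \<Rightarrow> (nat \<Rightarrow> real) set \<Rightarrow> real \<Rightarrow> (nat \<Rightarrow> real) \<Rightarrow> real" where
  "lossf k P th u = max th (Max ((\<lambda>p. ip k p u) ` P)) - th"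

lemma ip_lin: "ip k p (\<lambda>i. a * u i + c * v i) = a * ip k p u + c * ip k p v"
  unfolding ip_def by (simp add: sum.distrib sum_distrib_left algebra_simps)

lemma ip_add_scale: "ip k p (\<lambda>i. u i + c * v i) = ip k p u + c * ip k p v"
  unfolding ip_def by (simp add: sum.distrib sum_distrib_left algebra_simps)

lemma Max_img_le:
  assumes "finite P" "P \<noteq> {}" "\<And>p. p \<in> P \<Longrightarrow> f p \<le> x"
  shows "Max (f ` P) \<le> x"
  using assms by (simp add: Max_le_iff)

lemma Max_img_ge:
  assumes "finite P" "p \<in> P"
  shows "f p \<le> Max (f ` P)"
  using assms by (simp add: Max_ge)

lemma lossf_convex:
  assumes "finite P" "P \<noteq> {}"
  shows "convex_loss k (lossf k P th)"
  unfolding convex_loss_def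
proof (intro ballI allI impI)
  fix u v :: "nat \<Rightarrow> real" and t :: real
  assume t: "0 \<le> t \<and> t \<le> 1"
  define A where "A = Max ((\<lambda>p. ip k p u) ` P)"
  define B where "B = Max ((\<lambda>p. ip k p v) ` P)"
  have "Max ((\<lambda>p. ip k p (\<lambda>i. t * u i + (1 - t) * v i)) ` P) \<le> t * A + (1 - t) * B"
  proof (rule Max_img_le[OF assms])
    fix p assume p: "p \<in> P"
    have "ip k p u \<le> A" unfolding A_def using Max_img_ge[OF assms(1) p] .
    moreover have "ip k p v \<le> B" unfolding B_def using Max_img_ge[OF assms(1) p] .
    ultimately have "t * ip k p u + (1 - t) * ip k p v \<le> t * A + (1 - t) * B"
      using t by (intro add_mono mult_left_mono) auto
    then show "ip k p (\<lambda>i. t * u i + (1 - t) * v i) \<le> t * A + (1 - t) * B"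
      by (simp add: ip_lin)
  qed
  moreover have "max th (t * A + (1 - t) * B) \<le> t * max th A + (1 - t) * max th B"
  proof -
    have "t * A \<le> t * max th A" using t by (intro mult_left_mono) auto
    moreover have "(1 - t) * B \<le> (1 - t) * max th B" using t by (intro mult_left_mono) auto
    moreover have "th = t * th + (1 - t) * th" by (simp add: algebra_simps)
    moreover have "t * th \<le> t * max th A" using t by (intro mult_left_mono) auto
    moreover have "(1 - t) * th \<le> (1 - t) * max th B" using t by (intro mult_left_mono) auto
    ultimately show ?thesis by (smt (verit))
  qed
  ultimately have "max th (Max ((\<lambda>p. ip k p (\<lambda>i. t * u i + (1 - t) * v i)) ` P)) \<le> t * max th A + (1 - t) * max th B"
    by linarith
  then show "lossf k P th (\<lambda>i. t * u i + (1 - t) * v i) \<le> t * lossf k P th u + (1 - t) * lossf k P th v"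
    unfolding lossf_def A_def B_def by (simp add: algebra_simps)
qed

lemma ip_abs_le:
  assumes "ip k p p \<le> 1"
  shows "\<bar>ip k p w\<bar> \<le> enorm k w"
proof -
  have "(ip k p w)\<^sup>2 \<le> (\<Sum>i<k. (p i)\<^sup>2) * (\<Sum>i<k. (w i)\<^sup>2)"
    unfolding ip_def by (rule Cauchy_Schwarz_ineq_sum)
  also have "(\<Sum>i<k. (p i)\<^sup>2) = ip k p p" unfolding ip_def by (simp add: power2_eq_square)
  also have "ip k p p * (\<Sum>i<k. (w i)\<^sup>2) \<le> 1 * (\<Sum>i<k. (w i)\<^sup>2)"
    using assms by (intro mult_right_mono) (auto intro: sum_nonneg)
  finally have "(ip k p w)\<^sup>2 \<le> (\<Sum>i<k. (w i)\<^sup>2)" by simp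
  then have "sqrt ((ip k p w)\<^sup>2) \<le> sqrt (\<Sum>i<k. (w i)\<^sup>2)" by (rule real_sqrt_le_mono)
  then show ?thesis unfolding enorm_def by simp
qed

lemma Max_diff_le:
  fixes f g :: "'a \<Rightarrow> real"
  assumes "finite P" "P \<noteq> {}" "\<And>p. p \<in> P \<Longrightarrow> \<bar>f p - g p\<bar> \<le> e"
  shows "\<bar>Max (f ` P) - Max (g ` P)\<bar> \<le> e"
proof -
  have "Max (f ` P) \<in> f ` P" using assms(1,2) by (intro Max_in) auto
  then obtain p1 where p1: "p1 \<in> P" "Max (f ` P) = f p1" by auto
  have "Max (g ` P) \<in> g ` P" using assms(1,2) by (intro Max_in) auto
  then obtain p2 where p2: "p2 \<in> P" "Max (g ` P) = g p2" by auto
  have "g p1 \<le> Max (g ` P)" using Max_img_ge[OF assms(1) p1(1)] .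
  moreover have "f p2 \<le> Max (f ` P)" using Max_img_ge[OF assms(1) p2(1)] .
  moreover have "\<bar>f p1 - g p1\<bar> \<le> e" "\<bar>f p2 - g p2\<bar> \<le> e" using assms(3) p1 p2 by auto
  ultimately show ?thesis using p1 p2 by linarith
qed

lemma lossf_lip:
  assumes "finite P" "P \<noteq> {}" "\<And>p. p \<in> P \<Longrightarrow> ip k p p \<le> 1"
  shows "lipschitz1_loss k (lossf k P th)"
  unfolding lipschitz1_loss_def
proof (intro ballI)
  fix u v :: "nat \<Rightarrow> real"
  have "\<bar>Max ((\<lambda>p. ip k p u) ` P) - Max ((\<lambda>p. ip k p v) ` P)\<bar> \<le> enorm k (\<lambda>i. u i - v i)"
  proof (rule Max_diff_le[OF assms(1,2)])
    fix p assume "p \<in> P"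
    have "ip k p u - ip k p v = ip k p (\<lambda>i. u i - v i)"
      unfolding ip_def by (simp add: sum_subtractf algebra_simps)
    then show "\<bar>ip k p u - ip k p v\<bar> \<le> enorm k (\<lambda>i. u i - v i)"
      using ip_abs_le[OF assms(3)[OF \<open>p \<in> P\<close>]] by simp
  qed
  then show "\<bar>lossf k P th u - lossf k P th v\<bar> \<le> enorm k (\<lambda>i. u i - v i)"
    unfolding lossf_def by linarith
qed

lemma lossf_nonneg: "0 \<le> lossf k P th u"
  unfolding lossf_def by simp




definition goodcode :: "nat \<Rightarrow> nat \<Rightarrow> nat \<Rightarrow> (nat \<Rightarrow> real) set \<Rightarrow> (nat \<Rightarrow> nat \<Rightarrow> real) \<Rightarrow> bool" where
  "goodcode k h s P b \<longleftrightarrow> finite P \<and> P \<noteq> {} \<and> P \<subseteq> vecs k \<and> (\<forall>p\<in>P. ip k p p = 1) \<and>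
     (\<forall>j<h. b j \<in> vecs k) \<and>
     (\<forall>p\<in>P. \<forall>j<h. ip k p (b j) = 0 \<or> ip k p (b j) \<le> -1) \<and>
     (\<forall>p\<in>P. \<forall>q\<in>P. p \<noteq> q \<longrightarrow> ip k p q \<le> 1/2) \<and>
     (\<forall>Z. Z \<subseteq> {..<h} \<and> card Z \<le> s \<longrightarrow>
        (\<exists>p\<in>P. (\<forall>j\<in>Z. ip k p (b j) \<le> -1) \<and> real h \<le> 4 * real (card {j. j < h \<and> ip k p (b j) = 0})))"

lemma sum_shift0: "(\<Sum>i<Suc h. f i) = f 0 + (\<Sum>j<h. f (Suc j)) " for f :: "nat \<Rightarrow> real"
proof -
  have "(\<Sum>i<Suc h. f i) = (\<Sum>i\<in>insert 0 (Suc ` {..<h}). f i)" by (simp add: lessThan_Suc_eq_insert_0)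
  also have "\<dots> = f 0 + (\<Sum>i\<in>Suc ` {..<h}. f i)" by (subst sum.insert) auto
  also have "(\<Sum>i\<in>Suc ` {..<h}. f i) = (\<Sum>j<h. f (Suc j))" by (subst sum.reindex) auto
  finally show ?thesis .
qed

definition pv :: "nat \<Rightarrow> nat set \<Rightarrow> nat \<Rightarrow> real" where
  "pv h c = (\<lambda>i. if i = 0 then 1 / sqrt (real h + 1) else if i \<le> h then (if i - 1 \<in> c then -1 else 1) / sqrt (real h + 1) else 0)"

definition bv :: "nat \<Rightarrow> nat \<Rightarrow> nat \<Rightarrow> real" where
  "bv h j = (\<lambda>i. if i = 0 \<or> i = j + 1 then - sqrt (real h + 1) else 0)"

lemma ip_pv_pv:
  assumes "h + 1 \<le> k" "c \<subseteq> {..<h}" "c' \<subseteq> {..<h}"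
  shows "ip k (pv h c) (pv h c') = (1 + real h - 2 * real (card (sd c c'))) / (real h + 1)"
proof -
  define f where "f i = pv h c i * pv h c' i" for i
  have r: "sqrt (real h + 1) * sqrt (real h + 1) = real h + 1" by simp
  have "ip k (pv h c) (pv h c') = (\<Sum>i<k. f i)" unfolding ip_def f_def by simp
  also have "\<dots> = (\<Sum>i<Suc h. f i)"
    by (rule sum.mono_neutral_right) (use assms(1) in \<open>auto simp: f_def pv_def\<close>)
  also have "\<dots> = f 0 + (\<Sum>j<h. f (Suc j))" by (rule sum_shift0)
  also have "f 0 = 1 / (real h + 1)" unfolding f_def pv_def using r by (simp add: divide_simps)
  also have "(\<Sum>j<h. f (Suc j)) = (\<Sum>j<h. (1 - 2 * (if j \<in> sd c c' then 1 else 0)) / (real h + 1))"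
  proof (rule sum.cong[OF refl])
    fix j assume "j \<in> {..<h}"
    then show "f (Suc j) = (1 - 2 * (if j \<in> sd c c' then 1 else 0)) / (real h + 1)"
      unfolding f_def pv_def sd_def using r by (auto simp: divide_simps)
  qed
  also have "\<dots> = (real h - 2 * real (card (sd c c'))) / (real h + 1)"
  proof -
    have sdsub: "sd c c' \<subseteq> {..<h}" using assms unfolding sd_def by auto
    have "(\<Sum>j<h. (1 - 2 * (if j \<in> sd c c' then 1 else 0 :: real))) = real h - 2 * (\<Sum>j<h. (if j \<in> sd c c' then 1 else 0))"
      by (simp add: sum_subtractf sum_distrib_left)
    also have "(\<Sum>j<h. (if j \<in> sd c c' then 1 else 0 :: real)) = real (card (sd c c'))"
      using sdsub by (simp add: sum.If_cases Int_absorb1 Int_commute)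
    finally show ?thesis by (simp add: sum_divide_distrib[symmetric])
  qed
  finally show ?thesis by (simp add: diff_divide_distrib add_divide_distrib)
qed

lemma ip_pv_bv:
  assumes "h + 1 \<le> k" "j < h"
  shows "ip k (pv h c) (bv h j) = (if j \<in> c then 0 else -2)"
proof -
  define r where "r = sqrt (real h + 1)"
  have r: "r * r = real h + 1" "r > 0" unfolding r_def by auto
  have "ip k (pv h c) (bv h j) = (\<Sum>i<k. (if i = 0 then - r * pv h c i else 0) + (if i = j + 1 then - r * pv h c i else 0))"
    unfolding ip_def bv_def r_def by (intro sum.cong refl) auto
  also have "\<dots> = - r * pv h c 0 + - r * pv h c (j + 1)"
    using assms by (simp add: sum.distrib)
  also have "\<dots> = (if j \<in> c then 0 else -2)"
    using assms r unfolding pv_def r_def[symmetric] by (auto simp: divide_simps)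
  finally show ?thesis .
qed

lemma pv_vecs: "h + 1 \<le> k \<Longrightarrow> pv h c \<in> vecs k"
  unfolding vecs_def pv_def by auto

lemma bv_vecs: "j < h \<Longrightarrow> h + 1 \<le> k \<Longrightarrow> bv h j \<in> vecs k"
  unfolding vecs_def bv_def by auto

lemma pv_inj:
  assumes "c \<subseteq> {..<h}" "c' \<subseteq> {..<h}" "pv h c = pv h c'"
  shows "c = c'"
proof (rule ccontr)
  assume "c \<noteq> c'"
  then obtain j where j: "j < h" "(j \<in> c) \<noteq> (j \<in> c')" using assms(1,2) by blast
  have "pv h c (Suc j) = pv h c' (Suc j)" using assms(3) by simp
  then show False using j unfolding pv_def by (auto split: if_splits)
qed

definition codeC :: "nat \<Rightarrow> nat set set" where
  "codeC h = (SOME C. C \<subseteq> Pow {..<h} \<and> C \<noteq> {} \<and>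
     (\<forall>c\<in>C. \<forall>c'\<in>C. c \<noteq> c' \<longrightarrow> h + 1 \<le> 4 * card (sd c c')) \<and>
     (\<forall>Z. Z \<subseteq> {..<h} \<and> card Z \<le> h div 64 \<longrightarrow> (\<exists>c\<in>C. c \<inter> Z = {} \<and> h \<le> 4 * card c)))"

lemma binary_goodcode:
  assumes k: "705 \<le> k"
  shows "goodcode k (k - 1) ((k - 1) div 64) (pv (k - 1) ` codeC (k - 1)) (bv (k - 1))"
proof -
  define h where "h = k - 1"
  have hk: "h + 1 \<le> k" "704 \<le> h" using k unfolding h_def by auto
  define C where "C = codeC h"
  have Cp: "C \<subseteq> Pow {..<h} \<and> C \<noteq> {} \<and>
     (\<forall>c\<in>C. \<forall>c'\<in>C. c \<noteq> c' \<longrightarrow> h + 1 \<le> 4 * card (sd c c')) \<and>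
     (\<forall>Z. Z \<subseteq> {..<h} \<and> card Z \<le> h div 64 \<longrightarrow> (\<exists>c\<in>C. c \<inter> Z = {} \<and> h \<le> 4 * card c))"
    unfolding C_def codeC_def by (rule someI_ex[OF code_exists[OF hk(2)]])
  have C1: "C \<subseteq> Pow {..<h}" using Cp by (rule conjunct1)
  have C2: "C \<noteq> {}" using Cp by blast
  have C3: "\<And>c c'. c\<in>C \<Longrightarrow> c'\<in>C \<Longrightarrow> c \<noteq> c' \<Longrightarrow> h + 1 \<le> 4 * card (sd c c')"
    using Cp by blast
  have C4': "\<forall>Z. Z \<subseteq> {..<h} \<and> card Z \<le> h div 64 \<longrightarrow> (\<exists>c\<in>C. c \<inter> Z = {} \<and> h \<le> 4 * card c)"
    using Cp by (elim conjE) assumption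
  have C4: "\<And>Z. Z \<subseteq> {..<h} \<Longrightarrow> card Z \<le> h div 64 \<Longrightarrow> (\<exists>c\<in>C. c \<inter> Z = {} \<and> h \<le> 4 * card c)"
    using C4' by blast
  note C = C1 C2 C3 C4
  have finC: "finite C" using C(1) by (meson finite_Pow_iff finite_lessThan finite_subset)
  have ipp: "ip k (pv h c) (pv h c) = 1" if "c \<in> C" for c
  proof -
    have "c \<subseteq> {..<h}" using C(1) that by auto
    then show ?thesis using ip_pv_pv[OF hk(1)] by (simp add: sd_def)
  qed
  have "goodcode k h (h div 64) (pv h ` C) (bv h)"
    unfolding goodcode_def
  proof (intro conjI ballI allI impI)
    show "finite (pv h ` C)" using finC by simp
    show "pv h ` C \<noteq> {}" using C(2) by simp
    show "pv h ` C \<subseteq> vecs k" using pv_vecs[OF hk(1)] by auto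
  next
    fix p assume "p \<in> pv h ` C"
    then show "ip k p p = 1" using ipp by auto
  next
    fix j assume "j < h" then show "bv h j \<in> vecs k" using bv_vecs hk by auto
  next
    fix p j assume "p \<in> pv h ` C" "j < h"
    then show "ip k p (bv h j) = 0 \<or> ip k p (bv h j) \<le> -1" using ip_pv_bv[OF hk(1)] by (auto split: if_splits)
  next
    fix p q assume pq: "p \<in> pv h ` C" "q \<in> pv h ` C" "p \<noteq> q"
    then obtain c c' where cc: "c \<in> C" "c' \<in> C" "p = pv h c" "q = pv h c'" by auto
    then have ne: "c \<noteq> c'" using pq(3) by auto
    have sub: "c \<subseteq> {..<h}" "c' \<subseteq> {..<h}" using C(1) cc by auto
    have d: "real h + 1 \<le> 4 * real (card (sd c c'))" using C(3)[OF cc(1,2) ne] by linarith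
    have "ip k p q = (1 + real h - 2 * real (card (sd c c'))) / (real h + 1)"
      using ip_pv_pv[OF hk(1) sub] cc by simp
    also have "\<dots> \<le> 1/2" using d by (simp add: divide_simps)
    finally show "ip k p q \<le> 1/2" .
  next
    fix Z :: "nat set" assume Z: "Z \<subseteq> {..<h} \<and> card Z \<le> h div 64"
    then obtain c where c: "c \<in> C" "c \<inter> Z = {}" "h \<le> 4 * card c" using C(4) by blast
    have csub: "c \<subseteq> {..<h}" using C(1) c(1) by auto
    show "\<exists>p\<in>pv h ` C. (\<forall>j\<in>Z. ip k p (bv h j) \<le> -1) \<and> real h \<le> 4 * real (card {j. j < h \<and> ip k p (bv h j) = 0})"
    proof (intro bexI[of _ "pv h c"] conjI ballI)
      show "pv h c \<in> pv h ` C" using c(1) by simp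
    next
      fix j assume "j \<in> Z"
      then have "j < h" "j \<notin> c" using Z c(2) by auto
      then show "ip k (pv h c) (bv h j) \<le> -1" using ip_pv_bv[OF hk(1)] by simp
    next
      have "{j. j < h \<and> ip k (pv h c) (bv h j) = 0} = c"
        using ip_pv_bv[OF hk(1)] csub by (auto split: if_splits)
      then show "real h \<le> 4 * real (card {j. j < h \<and> ip k (pv h c) (bv h j) = 0})"
        using c(3) by simp
    qed
  qed
  then show ?thesis unfolding h_def C_def .
qed

definition e0 :: "nat \<Rightarrow> real" where "e0 = (\<lambda>i. if i = 0 then 1 else 0)"

lemma fallback_goodcode:
  assumes "1 \<le> k"
  shows "goodcode k 1 0 {e0} (\<lambda>_ _. 0)"
proof -
  have "ip k e0 e0 = (\<Sum>i<k. if i = 0 then 1 else 0)"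
    unfolding ip_def e0_def by (intro sum.cong) auto
  also have "\<dots> = 1" using assms by (simp add: sum.delta sum.delta')
  finally have ipe: "ip k e0 e0 = 1" .
  have ipz: "ip k e0 (\<lambda>_. 0) = 0" unfolding ip_def by simp
  have hit: "{j. j < (1::nat) \<and> ip k e0 (\<lambda>_. 0) = 0} = {0}" using ipz by auto
  have Z0: "Z = {}" if "Z \<subseteq> {..<1::nat}" "card Z \<le> 0" for Z
  proof -
    have "finite Z" using that(1) by (rule finite_subset) simp
    then show ?thesis using that(2) by simp
  qed
  show ?thesis unfolding goodcode_def
  proof (intro conjI ballI allI impI)
    fix Z :: "nat set" assume "Z \<subseteq> {..<1} \<and> card Z \<le> 0"
    then have "Z = {}" using Z0 by blast
    then show "\<exists>p\<in>{e0}. (\<forall>j\<in>Z. ip k p ((\<lambda>_ _. 0) j) \<le> -1) \<and> real 1 \<le> 4 * real (card {j::nat. j < 1 \<and> ip k p ((\<lambda>_ _. 0) j) = 0})"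
      using ipz by simp
  qed (use ipe ipz assms in \<open>auto simp: vecs_def e0_def\<close>)
qed




definition xv :: "nat \<Rightarrow> nat \<Rightarrow> nat \<Rightarrow> nat \<Rightarrow> real" where
  "xv T t j = (\<lambda>c. if c = t \<or> c = T + j then 1 / sqrt 2 else 0)"

definition W0m :: "nat \<Rightarrow> nat \<Rightarrow> nat \<Rightarrow> (nat \<Rightarrow> nat \<Rightarrow> real) \<Rightarrow> nat \<Rightarrow> nat \<Rightarrow> real" where
  "W0m k T h b = (\<lambda>i c. if i < k \<and> T \<le> c \<and> c < T + h then sqrt 2 * b (c - T) i else 0)"

lemma xv_split:
  assumes "t < T"
  shows "xv T t j c = (if c = t then 1 / sqrt 2 else 0) + (if c = T + j then 1 / sqrt 2 else 0)"
  using assms unfolding xv_def by auto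

lemma mv_xv:
  assumes "t < T" "T + j < m"
  shows "mv k m W (xv T t j) = (\<lambda>i. if i < k then (W i t + W i (T + j)) / sqrt 2 else 0)"
proof
  fix i
  have "(\<Sum>c<m. W i c * xv T t j c) = (\<Sum>c<m. (if c = t then W i c / sqrt 2 else 0) + (if c = T + j then W i c / sqrt 2 else 0))"
    by (intro sum.cong refl) (simp add: xv_split[OF assms(1)] distrib_left)
  also have "\<dots> = W i t / sqrt 2 + W i (T + j) / sqrt 2"
    using assms by (simp add: sum.distrib sum.delta')
  finally show "mv k m W (xv T t j) i = (if i < k then (W i t + W i (T + j)) / sqrt 2 else 0)"
    unfolding mv_def by (simp add: add_divide_distrib)
qed

lemma xv_vecs: "t < T \<Longrightarrow> T + j < m \<Longrightarrow> xv T t j \<in> vecs m"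
  unfolding vecs_def xv_def by auto

lemma xv_norm:
  assumes "t < T" "T + j < m"
  shows "enorm m (xv T t j) = 1"
proof -
  have "(\<Sum>c<m. (xv T t j c)\<^sup>2) = (\<Sum>c<m. (if c = t then 1/2 else 0) + (if c = T + j then 1/2 else 0))"
    by (intro sum.cong refl) (use assms in \<open>auto simp: xv_def power_divide\<close>)
  also have "\<dots> = 1" using assms by (simp add: sum.distrib sum.delta')
  finally show ?thesis unfolding enorm_def by simp
qed

lemma xv_inj: "inj_on (\<lambda>(t, j). xv T t j) ({..<T} \<times> {..<h})"
proof (rule inj_onI)
  fix x y assume x: "x \<in> {..<T} \<times> {..<h}" and y: "y \<in> {..<T} \<times> {..<h}"
    and eq: "(\<lambda>(t, j). xv T t j) x = (\<lambda>(t, j). xv T t j) y"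
  obtain t j where tj: "x = (t, j)" "t < T" "j < h" using x by auto
  obtain t' j' where tj': "y = (t', j')" "t' < T" "j' < h" using y by auto
  have e: "xv T t j = xv T t' j'" using eq tj tj' by simp
  have "xv T t j t = xv T t' j' t" using e by simp
  then have "t = t'" using tj tj' unfolding xv_def by (auto split: if_splits)
  moreover have "xv T t j (T + j) = xv T t' j' (T + j)" using e by simp
  then have "j = j'" using tj tj' unfolding xv_def by (auto split: if_splits)
  ultimately show "x = y" using tj tj' by simp
qed

lemma gc_facts:
  assumes "goodcode k h s P b"
  shows "finite P" "P \<noteq> {}" "P \<subseteq> vecs k" "\<And>p. p \<in> P \<Longrightarrow> ip k p p = 1"
    "\<And>j. j < h \<Longrightarrow> b j \<in> vecs k"
    "\<And>p j. p \<in> P \<Longrightarrow> j < h \<Longrightarrow> ip k p (b j) = 0 \<or> ip k p (b j) \<le> -1"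
    "\<And>p q. p \<in> P \<Longrightarrow> q \<in> P \<Longrightarrow> p \<noteq> q \<Longrightarrow> ip k p q \<le> 1/2"
  using assms unfolding goodcode_def by simp_all

lemma gc_Z:
  assumes "goodcode k h s P b" "Z \<subseteq> {..<h}" "card Z \<le> s"
  shows "\<exists>p\<in>P. (\<forall>j\<in>Z. ip k p (b j) \<le> -1) \<and> real h \<le> 4 * real (card {j. j < h \<and> ip k p (b j) = 0})"
proof -
  have "\<forall>Z. Z \<subseteq> {..<h} \<and> card Z \<le> s \<longrightarrow>
        (\<exists>p\<in>P. (\<forall>j\<in>Z. ip k p (b j) \<le> -1) \<and> real h \<le> 4 * real (card {j. j < h \<and> ip k p (b j) = 0}))"
    using assms(1) unfolding goodcode_def by (elim conjE) assumption
  then show ?thesis using assms(2,3) by blast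
qed

lemma loss_zero:
  assumes gc: "goodcode k h s P b" and j: "j < h" and th: "0 \<le> th"
  shows "lossf k P th (b j) = 0"
proof -
  have "Max ((\<lambda>p. ip k p (b j)) ` P) \<le> 0"
    by (rule Max_img_le[OF gc_facts(1,2)[OF gc]]) (use gc_facts(6)[OF gc _ j] in force)
  then show ?thesis unfolding lossf_def using th by simp
qed

lemma loss_seen:
  assumes gc: "goodcode k h s P b" and p0: "p0 \<in> P" and j: "j < h" and hit: "ip k p0 (b j) \<le> -1"
    and g: "0 \<le> g" "g \<le> 1" "g \<le> 2 * th"
  shows "lossf k P th (\<lambda>i. b j i + g * p0 i) = 0"
proof -
  have "Max ((\<lambda>p. ip k p (\<lambda>i. b j i + g * p0 i)) ` P) \<le> th"
  proof (rule Max_img_le[OF gc_facts(1,2)[OF gc]])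
    fix p assume p: "p \<in> P"
    have e: "ip k p (\<lambda>i. b j i + g * p0 i) = ip k p (b j) + g * ip k p p0" by (rule ip_add_scale)
    show "ip k p (\<lambda>i. b j i + g * p0 i) \<le> th"
    proof (cases "p = p0")
      case True
      then have "ip k p p0 = 1" using gc_facts(4)[OF gc p0] by simp
      then show ?thesis using e True hit g by simp
    next
      case False
      have "ip k p p0 \<le> 1/2" using gc_facts(7)[OF gc p p0 False] .
      then have "g * ip k p p0 \<le> g * (1/2)" using g by (intro mult_left_mono) auto
      moreover have "ip k p (b j) \<le> 0" using gc_facts(6)[OF gc p j] by auto
      ultimately show ?thesis using e g by simp
    qed
  qed
  moreover have "0 \<le> th" using g by simp
  ultimately show ?thesis unfolding lossf_def by simp
qed

lemma loss_hit:
  assumes gc: "goodcode k h s P b" and p0: "p0 \<in> P" and hit: "ip k p0 (b j) = 0"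
  shows "g - th \<le> lossf k P th (\<lambda>i. b j i + g * p0 i)"
proof -
  have "ip k p0 (\<lambda>i. b j i + g * p0 i) = g"
    using ip_add_scale[of k p0 "b j" g p0] hit gc_facts(4)[OF gc p0] by simp
  then have "g \<le> Max ((\<lambda>p. ip k p (\<lambda>i. b j i + g * p0 i)) ` P)"
    using Max_img_ge[OF gc_facts(1)[OF gc] p0, of "\<lambda>p. ip k p (\<lambda>i. b j i + g * p0 i)"] by simp
  then show ?thesis unfolding lossf_def by simp
qed

lemma excess_arith:
  fixes g T n s :: nat
  assumes "real T \<le> 2 * real g" "g \<le> T" "1 \<le> g" "real T \<le> 4 * real n / real (s + 1)" "1 \<le> n"
  shows "(1/80) * sqrt (real (s + 1) / real n) \<le> real g * ((1 / sqrt (real g)) / sqrt 2 - 1 / (2 * sqrt (real T))) / (4 * real T)"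
proof -
  define x where "x = sqrt (real T)"
  define y where "y = sqrt (real g)"
  have T1: "1 \<le> T" using assms by linarith
  have x0: "0 < x" unfolding x_def using T1 by simp
  have sg: "y \<le> x" unfolding x_def y_def using assms(2) by simp
  have sg0: "0 < y" unfolding y_def using assms(3) by simp
  have s2: "sqrt 2 \<le> (1.42::real)"
  proof -
    have "sqrt 2 \<le> sqrt ((1.42::real) ^ 2)" by (rule real_sqrt_le_mono) (simp add: power2_eq_square)
    then show ?thesis by simp
  qed
  have s20: "0 < sqrt (2::real)" by simp
  have m1: "y * sqrt 2 \<le> x * 1.42" using sg s2 sg0 s20 x0 by (intro mult_mono) auto
  have m2: "1 / (x * 1.42) \<le> 1 / (y * sqrt 2)"
    by (rule divide_left_mono[OF m1]) (use sg0 s20 x0 in auto)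
  have e1: "(1 / y) / sqrt 2 = 1 / (y * sqrt 2)" by simp
  have e2: "1 / (x * 1.42) - 1 / (2 * x) = (1 / x) * (1 / 1.42 - 1 / 2)" using x0 by (simp add: field_simps)
  have e3: "(1/5::real) \<le> 1 / 1.42 - 1 / 2" by simp
  have ix0: "0 < 1 / x" using x0 by simp
  have gam: "(1/5) * (1 / x) \<le> (1 / y) / sqrt 2 - 1 / (2 * x)"
  proof -
    have "(1/5) * (1 / x) \<le> (1 / 1.42 - 1 / 2) * (1 / x)" using ix0 by (intro mult_right_mono[OF e3]) simp
    also have "\<dots> = 1 / (x * 1.42) - 1 / (2 * x)" using e2 by simp
    also have "\<dots> \<le> (1 / y) / sqrt 2 - 1 / (2 * x)" using m2 e1 by simp
    finally show ?thesis .
  qed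
  have "0 \<le> (1/5) * (1 / x)" using ix0 by simp
  then have d0: "0 \<le> (1 / y) / sqrt 2 - 1 / (2 * x)" using gam by linarith
  have "(real T / 2) * ((1/5) * (1/x)) \<le> real g * ((1 / y) / sqrt 2 - 1 / (2 * x))"
  proof (rule mult_mono)
    show "real T / 2 \<le> real g" using assms(1) by simp
    show "(1/5) * (1/x) \<le> (1 / y) / sqrt 2 - 1 / (2 * x)" by (rule gam)
    show "0 \<le> (1/5) * (1/x)" using ix0 by simp
    show "0 \<le> real g" by simp
  qed
  then have A: "(real T / 2) * ((1/5) * (1/x)) / (4 * real T) \<le> real g * ((1 / y) / sqrt 2 - 1 / (2 * x)) / (4 * real T)"
    by (rule divide_right_mono) simp
  have B: "(real T / 2) * ((1/5) * (1/x)) / (4 * real T) = (1/40) * (1/x)" using T1 by (simp add: field_simps)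
  have C: "(1/80) * sqrt (real (s + 1) / real n) \<le> (1/40) * (1/x)"
  proof -
    have n0: "0 < real n" using assms(5) by simp
    have "x \<le> sqrt (4 * real n / real (s + 1))" unfolding x_def using assms(4) by simp
    also have "sqrt (4 * real n / real (s + 1)) = 2 * sqrt (real n / real (s + 1))"
      by (simp add: real_sqrt_mult real_sqrt_divide)
    finally have xle: "x \<le> 2 * sqrt (real n / real (s + 1))" .
    have one: "sqrt (real (s + 1) / real n) * sqrt (real n / real (s + 1)) = 1"
      using n0 by (simp add: real_sqrt_mult[symmetric])
    have "sqrt (real (s + 1) / real n) * x \<le> sqrt (real (s + 1) / real n) * (2 * sqrt (real n / real (s + 1)))"
      using xle by (intro mult_left_mono) auto
    also have "\<dots> = 2" using one by simp
    finally have "sqrt (real (s + 1) / real n) * x \<le> 2" .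
    then have "sqrt (real (s + 1) / real n) \<le> 2 / x" using x0 by (simp add: field_simps)
    then show ?thesis by (simp add: field_simps)
  qed
  show ?thesis using A B C unfolding x_def y_def by linarith
qed




definition goal_inst :: "nat \<Rightarrow> nat \<Rightarrow> nat \<Rightarrow> real \<Rightarrow> bool" where
  "goal_inst k n m e \<longleftrightarrow> (\<exists>W0 l D.
          W0 \<in> mats k m \<and>
          convex_loss k l \<and> lipschitz1_loss k l \<and>
          prob_space D \<and>
          (\<forall>x\<in>space D. x \<in> vecs m \<and> enorm m x \<le> 1) \<and>
          (\<forall>W\<in>hyp_ball k m W0. integrable D (\<lambda>x. l (mv k m W x))) \<and>
          (\<exists>E \<in> sets (PiM {..<n} (\<lambda>_. D)).
             measure (PiM {..<n} (\<lambda>_. D)) E \<ge> 1 \<and>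
             (\<forall>S\<in>E.
                \<exists>What \<in> hyp_ball k m W0.
                  (\<forall>W\<in>hyp_ball k m W0. emp_risk k m l n S What \<le> emp_risk k m l n S W) \<and>
                  (\<exists>Wstar \<in> hyp_ball k m W0.
                     (\<forall>W\<in>hyp_ball k m W0. pop_risk k m l D Wstar \<le> pop_risk k m l D W) \<and>
                     pop_risk k m l D What - pop_risk k m l D Wstar \<ge> e))))"

lemma sum_over_A:
  "(\<Sum>x\<in>(\<lambda>(t, j). xv T t j) ` ({..<T} \<times> {..<h}). f x) = (\<Sum>t<T. \<Sum>j<h. f (xv T t j))"
proof -
  have "(\<Sum>x\<in>(\<lambda>(t, j). xv T t j) ` ({..<T} \<times> {..<h}). f x) = (\<Sum>y\<in>{..<T} \<times> {..<h}. f ((\<lambda>(t, j). xv T t j) y))"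
    using sum.reindex[OF xv_inj[of T h], of f] by (simp add: comp_def)
  also have "\<dots> = (\<Sum>t<T. \<Sum>j<h. f (xv T t j))"
    by (simp add: sum.cartesian_product split_def)
  finally show ?thesis .
qed

lemma card_A: "card ((\<lambda>(t, j). xv T t j) ` ({..<T} \<times> {..<h})) = T * h"
  using card_image[OF xv_inj[of T h]] by simp

lemma W0m_mats: "W0m k T h b \<in> mats k (T + h)"
  unfolding mats_def W0m_def by auto

lemma mv_W0m:
  assumes "t < T" "j < h" "T + h \<le> m" "b j \<in> vecs k"
  shows "mv k m (W0m k T h b) (xv T t j) = b j"
proof
  fix i
  have "T + j < m" using assms by simp
  then have "mv k m (W0m k T h b) (xv T t j) i = (if i < k then (W0m k T h b i t + W0m k T h b i (T + j)) / sqrt 2 else 0)"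
    using mv_xv[OF assms(1)] by simp
  also have "\<dots> = b j i"
    using assms unfolding W0m_def vecs_def by auto
  finally show "mv k m (W0m k T h b) (xv T t j) i = b j i" .
qed




lemma erm_part:
  assumes gc: "goodcode k h s P b" and n1: "1 \<le> n" and sn: "s + 1 \<le> n" and h1: "1 \<le> h"
    and T_def: "T = 2 * (n div (s + 1) + 1)" and Tm: "T + h \<le> m"
    and th_def: "th = 1 / (2 * sqrt (real T))"
    and S: "\<forall>i<n. S i \<in> (\<lambda>(t, j). xv T t j) ` ({..<T} \<times> {..<h})"
  shows "\<exists>What \<in> hyp_ball k m (W0m k T h b).
     (\<forall>W\<in>hyp_ball k m (W0m k T h b). emp_risk k m (lossf k P th) n S What \<le> emp_risk k m (lossf k P th) n S W) \<and>
     (1/80) * sqrt (real (s + 1) / real n) \<le> pop_risk k m (lossf k P th) (uniform_count_measure ((\<lambda>(t, j). xv T t j) ` ({..<T} \<times> {..<h}))) What"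
proof -
  define A where "A = (\<lambda>(t, j). xv T t j) ` ({..<T} \<times> {..<h})"
  define W0 where "W0 = W0m k T h b"
  define l where "l = lossf k P th"
  define Z where "Z t = {j. j < h \<and> xv T t j \<in> S ` {..<n}}" for t
  define G where "G = {t. t < T \<and> card (Z t) \<le> s}"
  define Bad where "Bad = {t. t < T \<and> s < card (Z t)}"
  have Zsub: "Z t \<subseteq> {..<h}" for t unfolding Z_def by auto
  have finZ: "finite (Z t)" for t using Zsub finite_subset by blast
  have Gsub: "G \<subseteq> {..<T}" unfolding G_def by auto
  have finG: "finite G" "finite Bad" unfolding G_def Bad_def by auto
  have GB: "{..<T} = G \<union> Bad" "G \<inter> Bad = {}" unfolding G_def Bad_def by auto
  have sumZ: "(\<Sum>t<T. card (Z t)) \<le> n"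
  proof -
    have "(\<Sum>t<T. card (Z t)) = card (SIGMA t:{..<T}. Z t)"
      by (rule card_SigmaI[symmetric]) (auto simp: finZ)
    also have "\<dots> = card ((\<lambda>(t, j). xv T t j) ` (SIGMA t:{..<T}. Z t))"
    proof (rule card_image[symmetric])
      show "inj_on (\<lambda>(t, j). xv T t j) (SIGMA t:{..<T}. Z t)"
        by (rule inj_on_subset[OF xv_inj[of T h]]) (use Zsub in auto)
    qed
    also have "\<dots> \<le> card (S ` {..<n})"
      by (rule card_mono) (auto simp: Z_def)
    also have "\<dots> \<le> n" using card_image_le[of "{..<n}" S] by simp
    finally show ?thesis .
  qed
  have "card Bad * (s + 1) \<le> n"
  proof -
    have "card Bad * (s + 1) = (\<Sum>t\<in>Bad. s + 1)" by simp
    also have "\<dots> \<le> (\<Sum>t\<in>Bad. card (Z t))" by (rule sum_mono) (simp add: Bad_def)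
    also have "\<dots> \<le> (\<Sum>t<T. card (Z t))" by (rule sum_mono2) (auto simp: Bad_def)
    finally show ?thesis using sumZ by linarith
  qed
  then have cBad: "card Bad \<le> n div (s + 1)" by (simp add: less_eq_div_iff_mult_less_eq)
  have cGB: "card G + card Bad = T"
  proof -
    have "card (G \<union> Bad) = T" unfolding GB(1)[symmetric] by simp
    then show ?thesis using card_Un_disjoint[OF finG GB(2)] by simp
  qed
  have T2: "2 \<le> T" using T_def by simp
  have g2: "T \<le> 2 * card G"
  proof -
    define q where "q = n div (s + 1)"
    have "card Bad \<le> q" "T = 2 * (q + 1)" using cBad T_def unfolding q_def by auto
    then show ?thesis using cGB by arith
  qed
  have gT: "card G \<le> T" using cGB by linarith
  have g1: "1 \<le> card G" using g2 T2 by linarith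
  define pc where "pc t = (SOME p. p \<in> P \<and> (\<forall>j\<in>Z t. ip k p (b j) \<le> -1) \<and> real h \<le> 4 * real (card {j. j < h \<and> ip k p (b j) = 0}))" for t
  have pcex: "pc t \<in> P \<and> (\<forall>j\<in>Z t. ip k (pc t) (b j) \<le> -1) \<and> real h \<le> 4 * real (card {j. j < h \<and> ip k (pc t) (b j) = 0})"
    if "t \<in> G" for t
  proof -
    have "card (Z t) \<le> s" using that unfolding G_def by simp
    then have "\<exists>p. p \<in> P \<and> (\<forall>j\<in>Z t. ip k p (b j) \<le> -1) \<and> real h \<le> 4 * real (card {j. j < h \<and> ip k p (b j) = 0})"
      using gc_Z[OF gc Zsub] by blast
    then show ?thesis unfolding pc_def by (rule someI_ex)
  qed
  have pcP: "pc t \<in> P" if "t \<in> G" for t using pcex[OF that] by blast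
  have pcZ: "\<And>j. j \<in> Z t \<Longrightarrow> ip k (pc t) (b j) \<le> -1" if "t \<in> G" for t using pcex[OF that] by blast
  have pcH: "real h \<le> 4 * real (card {j. j < h \<and> ip k (pc t) (b j) = 0})" if "t \<in> G" for t using pcex[OF that] by blast
  define bt where "bt = 1 / sqrt (real (card G))"
  define gm where "gm = bt / sqrt 2"
  define What where "What = (\<lambda>i c. W0 i c + (if i < k \<and> c \<in> G then bt * pc c i else 0))"
  have bvec: "b j \<in> vecs k" if "j < h" for j using gc_facts(5)[OF gc that] .
  have pcvec: "pc t \<in> vecs k" if "t \<in> G" for t using gc_facts(3)[OF gc] pcP[OF that] by blast
  have mvW: "mv k m What (xv T t j) = (\<lambda>i. b j i + (if t \<in> G then gm else 0) * pc t i)" if tj: "t < T" "j < h" for t j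
  proof
    fix i
    have "T + j < m" using tj Tm by simp
    then have "mv k m What (xv T t j) i = (if i < k then (What i t + What i (T + j)) / sqrt 2 else 0)"
      using mv_xv[OF tj(1)] by simp
    also have "\<dots> = b j i + (if t \<in> G then gm else 0) * pc t i"
    proof (cases "i < k")
      case True
      have w1: "What i t = (if t \<in> G then bt * pc t i else 0)" unfolding What_def W0_def W0m_def using tj True by auto
      have "T + j \<notin> G" using Gsub by auto
      then have w2: "What i (T + j) = sqrt 2 * b j i" unfolding What_def W0_def W0m_def using tj True by auto
      show ?thesis using True w1 w2 unfolding gm_def by (auto simp: field_simps)
    next
      case False
      have "b j i = 0" using bvec[OF tj(2)] False unfolding vecs_def by simp
      moreover have "(if t \<in> G then gm else 0) * pc t i = 0"
        using pcvec False unfolding vecs_def by auto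
      ultimately show ?thesis using False by simp
    qed
    finally show "mv k m What (xv T t j) i = b j i + (if t \<in> G then gm else 0) * pc t i" .
  qed
  have sqg: "0 < sqrt (real (card G))" using g1 by simp
  have sq2: "1 \<le> sqrt (2::real)" by simp
  have gm0: "0 \<le> gm" unfolding gm_def bt_def by simp
  have gm1: "gm \<le> 1"
  proof -
    have "1 \<le> sqrt (real (card G))" using g1 by simp
    then have "1 \<le> sqrt (real (card G)) * sqrt 2" using sq2 by (metis mult_mono' mult_1 zero_le_one)
    then show ?thesis unfolding gm_def bt_def by (simp add: field_simps)
  qed
  have gmth: "gm \<le> 2 * th"
  proof -
    have "sqrt (real T) \<le> sqrt (real (2 * card G))" using g2 by simp
    also have "\<dots> = sqrt 2 * sqrt (real (card G))" by (simp add: real_sqrt_mult)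
    finally have a: "sqrt (real T) \<le> sqrt 2 * sqrt (real (card G))" .
    have T0: "0 < sqrt (real T)" using g1 gT by simp
    have "1 / (sqrt 2 * sqrt (real (card G))) \<le> 1 / sqrt (real T)"
      using a T0 sqg by (intro divide_left_mono) auto
    then show ?thesis unfolding gm_def bt_def th_def by (simp add: field_simps)
  qed
  have th0: "0 \<le> th" unfolding th_def by simp
  have loss0: "l (mv k m What (xv T t j)) = 0" if "t < T" "j \<in> Z t" for t j
  proof -
    have j: "j < h" using that(2) unfolding Z_def by simp
    show ?thesis
    proof (cases "t \<in> G")
      case True
      then show ?thesis using mvW[OF that(1) j] loss_seen[OF gc pcP[OF True] j pcZ[OF True that(2)] gm0 gm1 gmth]
        unfolding l_def by simp
    next
      case False
      have "(\<lambda>i. b j i + (if t \<in> G then gm else 0) * pc t i) = b j" using False by simp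
      then show ?thesis using mvW[OF that(1) j] loss_zero[OF gc j th0] unfolding l_def by simp
    qed
  qed
  have emp0: "emp_risk k m l n S What = 0"
  proof -
    have "(\<Sum>i<n. l (mv k m What (S i))) = 0"
    proof (rule sum.neutral, rule ballI)
      fix i assume "i \<in> {..<n}"
      then obtain t j where tj: "t < T" "j < h" "S i = xv T t j" using S by fastforce
      then have "j \<in> Z t" unfolding Z_def using \<open>i \<in> {..<n}\<close> by (auto intro: image_eqI[of _ S i])
      then show "l (mv k m What (S i)) = 0" using loss0[OF tj(1)] tj(3) by simp
    qed
    then show ?thesis unfolding emp_risk_def by simp
  qed
  have empnn: "0 \<le> emp_risk k m l n S W" for W
    unfolding emp_risk_def l_def by (intro divide_nonneg_nonneg sum_nonneg lossf_nonneg) simp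
  have Wmats: "What \<in> mats k m"
    unfolding mats_def What_def W0_def W0m_def using Gsub Tm by auto
  have frob: "frob_dist k m What W0 = 1"
  proof -
    have "(\<Sum>i<k. \<Sum>c<m. (What i c - W0 i c)\<^sup>2) = (\<Sum>i<k. \<Sum>c\<in>G. bt\<^sup>2 * (pc c i)\<^sup>2)"
    proof (rule sum.cong[OF refl])
      fix i assume i: "i \<in> {..<k}"
      have "(\<Sum>c<m. (What i c - W0 i c)\<^sup>2) = (\<Sum>c<m. if c \<in> G then bt\<^sup>2 * (pc c i)\<^sup>2 else 0)"
        by (rule sum.cong[OF refl]) (use i in \<open>auto simp: What_def power_mult_distrib\<close>)
      also have "\<dots> = (\<Sum>c\<in>{..<m} \<inter> G. bt\<^sup>2 * (pc c i)\<^sup>2)" by (simp add: sum.inter_restrict)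
      also have "{..<m} \<inter> G = G" using Gsub Tm by auto
      finally show "(\<Sum>c<m. (What i c - W0 i c)\<^sup>2) = (\<Sum>c\<in>G. bt\<^sup>2 * (pc c i)\<^sup>2)" .
    qed
    also have "\<dots> = (\<Sum>c\<in>G. \<Sum>i<k. bt\<^sup>2 * (pc c i)\<^sup>2)" by (rule sum.swap)
    also have "\<dots> = (\<Sum>c\<in>G. bt\<^sup>2 * ip k (pc c) (pc c))"
      by (rule sum.cong[OF refl]) (simp add: ip_def sum_distrib_left power2_eq_square)
    also have "\<dots> = (\<Sum>c\<in>G. bt\<^sup>2)" using gc_facts(4)[OF gc] pcP by simp
    also have "\<dots> = 1" unfolding bt_def using g1 by (simp add: power_divide)
    finally show ?thesis unfolding frob_dist_def by simp
  qed
  have Wball: "What \<in> hyp_ball k m W0" unfolding hyp_ball_def using Wmats frob by simp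
  have pop: "(1/80) * sqrt (real (s + 1) / real n) \<le> pop_risk k m l (uniform_count_measure A) What"
  proof -
    define F where "F t j = l (mv k m What (xv T t j))" for t j
    define Hit where "Hit t = {j. j < h \<and> ip k (pc t) (b j) = 0}" for t
    have finA: "finite A" unfolding A_def by simp
    have popf: "pop_risk k m l (uniform_count_measure A) What = (\<Sum>t<T. \<Sum>j<h. F t j) / real (T * h)"
    proof -
      have "pop_risk k m l (uniform_count_measure A) What = (\<Sum>x\<in>A. l (mv k m What x)) / real (card A)"
        unfolding pop_risk_def by (rule integral_uniform_count_measure[OF finA])
      also have "(\<Sum>x\<in>A. l (mv k m What x)) = (\<Sum>t<T. \<Sum>j<h. F t j)"
        unfolding A_def F_def by (rule sum_over_A)
      also have "card A = T * h" unfolding A_def by (rule card_A)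
      finally show ?thesis .
    qed
    have Fnn: "0 \<le> F t j" for t j unfolding F_def l_def by (rule lossf_nonneg)
    have gmth2: "th \<le> gm"
    proof -
      have "sqrt (real (card G)) \<le> sqrt (real T)" using gT by simp
      moreover have s22: "sqrt 2 \<le> (2::real)"
      proof -
        have "sqrt 2 \<le> sqrt ((2::real) ^ 2)" by (rule real_sqrt_le_mono) simp
        then show ?thesis by simp
      qed
      ultimately have "sqrt 2 * sqrt (real (card G)) \<le> 2 * sqrt (real T)"
        by (intro mult_mono) auto
      moreover have "0 < sqrt 2 * sqrt (real (card G))" using sqg by simp
      moreover have "0 < sqrt (real T)" using g1 gT by simp
      ultimately have "1 / (2 * sqrt (real T)) \<le> 1 / (sqrt 2 * sqrt (real (card G)))"
        by (intro divide_left_mono) auto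
      then show ?thesis unfolding gm_def bt_def th_def by (simp add: field_simps)
    qed
    have "real (card G) * (real h / 4) * (gm - th) = (\<Sum>t\<in>G. (real h / 4) * (gm - th))" by simp
    also have "\<dots> \<le> (\<Sum>t\<in>G. real (card (Hit t)) * (gm - th))"
      apply (rule sum_mono, rule mult_right_mono)
      subgoal for t using pcH[of t] unfolding Hit_def by simp
      subgoal using gmth2 by simp
      done
    also have "\<dots> = (\<Sum>t\<in>G. \<Sum>j\<in>Hit t. gm - th)" by simp
    also have "\<dots> \<le> (\<Sum>t\<in>G. \<Sum>j\<in>Hit t. F t j)"
    proof (rule sum_mono, rule sum_mono)
      fix t j assume t: "t \<in> G" and j: "j \<in> Hit t"
      have tT: "t < T" and jh: "j < h" using t j Gsub unfolding Hit_def by auto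
      have "F t j = lossf k P th (\<lambda>i. b j i + gm * pc t i)" unfolding F_def l_def using mvW[OF tT jh] t by simp
      then show "gm - th \<le> F t j" using loss_hit[OF gc pcP[OF t]] j unfolding Hit_def by simp
    qed
    also have "\<dots> \<le> (\<Sum>t\<in>G. \<Sum>j<h. F t j)"
      by (rule sum_mono, rule sum_mono2) (auto simp: Hit_def Fnn)
    also have "\<dots> \<le> (\<Sum>t<T. \<Sum>j<h. F t j)"
      by (rule sum_mono2) (use Gsub Fnn in \<open>auto intro: sum_nonneg\<close>)
    finally have low: "real (card G) * (real h / 4) * (gm - th) \<le> (\<Sum>t<T. \<Sum>j<h. F t j)" .
    have Th: "0 < real (T * h)" using g1 gT h1 by simp
    have "real (card G) * (gm - th) / (4 * real T) = real (card G) * (real h / 4) * (gm - th) / real (T * h)"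
    proof -
      have hr: "real h \<noteq> 0" using h1 by simp
      have Tr: "real T \<noteq> 0" using T2 by simp
      show ?thesis using hr Tr by (simp add: field_simps)
    qed
    also have "\<dots> \<le> (\<Sum>t<T. \<Sum>j<h. F t j) / real (T * h)"
      using low Th by (intro divide_right_mono) auto
    finally have p1: "real (card G) * (gm - th) / (4 * real T) \<le> pop_risk k m l (uniform_count_measure A) What"
      using popf by simp
    have T4: "real T \<le> 4 * real n / real (s + 1)"
    proof -
      have q1: "1 \<le> n div (s + 1)" using sn by (simp add: less_eq_div_iff_mult_less_eq)
      have "real T \<le> 4 * real (n div (s + 1))" using q1 T_def by simp
      also have "real (n div (s + 1)) \<le> real n / real (s + 1)" by (rule of_nat_div_le_of_nat)
      finally show ?thesis by simp
    qed
    have "(1/80) * sqrt (real (s + 1) / real n) \<le> real (card G) * ((1 / sqrt (real (card G))) / sqrt 2 - 1 / (2 * sqrt (real T))) / (4 * real T)"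
      by (rule excess_arith) (use g2 gT g1 T4 n1 in auto)
    also have "\<dots> = real (card G) * (gm - th) / (4 * real T)" unfolding gm_def bt_def th_def by simp
    finally show ?thesis using p1 by linarith
  qed
  show ?thesis
    using Wball emp0 empnn pop unfolding W0_def l_def A_def by (intro bexI[of _ What]) auto
qed




lemma generic:
  assumes gc: "goodcode k h s P b" and n1: "1 \<le> n" and sn: "s + 1 \<le> n" and hn: "h \<le> n" and h1: "1 \<le> h"
    and e: "e \<le> (1/80) * sqrt (real (s + 1) / real n)"
  shows "goal_inst k n (5 * n) e"
proof -
  define T where "T = 2 * (n div (s + 1) + 1)"
  define m where "m = 5 * n"
  have Tm: "T + h \<le> m"
  proof -
    define q where "q = n div (s + 1)"
    have "q \<le> n" unfolding q_def by (rule div_le_dividend)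
    then show ?thesis unfolding T_def m_def q_def[symmetric] using hn n1 by arith
  qed
  have T2: "2 \<le> T" unfolding T_def by simp
  define A where "A = (\<lambda>(t, j). xv T t j) ` ({..<T} \<times> {..<h})"
  define D where "D = uniform_count_measure A"
  define th where "th = 1 / (2 * sqrt (real T))"
  define l where "l = lossf k P th"
  define W0 where "W0 = W0m k T h b"
  have finA: "finite A" unfolding A_def by simp
  have "(0, 0) \<in> {..<T} \<times> {..<h}" using T2 h1 by simp
  then have Ane: "A \<noteq> {}" unfolding A_def by blast
  have probD: "prob_space D" unfolding D_def using finA Ane by (rule prob_space_uniform_count_measure)
  have spD: "space D = A" unfolding D_def by (simp add: space_uniform_count_measure)
  have th0: "0 \<le> th" unfolding th_def by simp
  have bvec: "b j \<in> vecs k" if "j < h" for j using gc_facts(5)[OF gc that] .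
  have mvW0: "mv k m W0 (xv T t j) = b j" if "t < T" "j < h" for t j
    unfolding W0_def by (rule mv_W0m) (use that Tm bvec in auto)
  have popsum: "pop_risk k m l D W = (\<Sum>t<T. \<Sum>j<h. l (mv k m W (xv T t j))) / real (T * h)" for W
  proof -
    have "pop_risk k m l D W = (\<Sum>x\<in>A. l (mv k m W x)) / real (card A)"
      unfolding pop_risk_def D_def by (rule integral_uniform_count_measure[OF finA])
    also have "(\<Sum>x\<in>A. l (mv k m W x)) = (\<Sum>t<T. \<Sum>j<h. l (mv k m W (xv T t j)))"
      unfolding A_def by (rule sum_over_A)
    also have "card A = T * h" unfolding A_def by (rule card_A)
    finally show ?thesis .
  qed
  have pop0: "pop_risk k m l D W0 = 0"
  proof -
    have "(\<Sum>t<T. \<Sum>j<h. l (mv k m W0 (xv T t j))) = 0"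
      by (intro sum.neutral ballI) (simp add: mvW0 l_def loss_zero[OF gc _ th0])
    then show ?thesis using popsum by simp
  qed
  have popnn: "0 \<le> pop_risk k m l D W" for W
  proof -
    have "0 \<le> (\<Sum>t<T. \<Sum>j<h. l (mv k m W (xv T t j))) / real (T * h)"
      unfolding l_def by (intro divide_nonneg_nonneg sum_nonneg lossf_nonneg) simp
    then show ?thesis using popsum[of W] by simp
  qed
  have W0mats: "W0 \<in> mats k m" unfolding W0_def mats_def W0m_def using Tm by auto
  have W0ball: "W0 \<in> hyp_ball k m W0" unfolding hyp_ball_def frob_dist_def using W0mats by simp
  show ?thesis unfolding goal_inst_def m_def[symmetric]
  proof (rule exI[of _ W0], rule exI[of _ l], rule exI[of _ D], intro conjI)
    show "W0 \<in> mats k m" by (rule W0mats)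
    show "convex_loss k l" unfolding l_def by (rule lossf_convex[OF gc_facts(1,2)[OF gc]])
    show "lipschitz1_loss k l" unfolding l_def
      by (rule lossf_lip[OF gc_facts(1,2)[OF gc]]) (simp add: gc_facts(4)[OF gc])
    show "prob_space D" by (rule probD)
    show "\<forall>x\<in>space D. x \<in> vecs m \<and> enorm m x \<le> 1"
    proof
      fix x assume "x \<in> space D"
      then obtain t j where tj: "t < T" "j < h" "x = xv T t j" unfolding spD A_def by auto
      have "T + j < m" using tj Tm by simp
      then show "x \<in> vecs m \<and> enorm m x \<le> 1" using xv_vecs[OF tj(1)] xv_norm[OF tj(1)] tj(3) by simp
    qed
    show "\<forall>W\<in>hyp_ball k m W0. integrable D (\<lambda>x. l (mv k m W x))"
      unfolding D_def uniform_count_measure_def using finA by (simp add: integrable_point_measure_finite)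
    show "\<exists>E\<in>sets (PiM {..<n} (\<lambda>_. D)). 1 \<le> measure (PiM {..<n} (\<lambda>_. D)) E \<and>
      (\<forall>S\<in>E. \<exists>What\<in>hyp_ball k m W0.
         (\<forall>W\<in>hyp_ball k m W0. emp_risk k m l n S What \<le> emp_risk k m l n S W) \<and>
         (\<exists>Wstar\<in>hyp_ball k m W0. (\<forall>W\<in>hyp_ball k m W0. pop_risk k m l D Wstar \<le> pop_risk k m l D W) \<and>
            e \<le> pop_risk k m l D What - pop_risk k m l D Wstar))"
    proof (intro bexI[of _ "space (PiM {..<n} (\<lambda>_. D))"] conjI ballI)
      show "space (PiM {..<n} (\<lambda>_. D)) \<in> sets (PiM {..<n} (\<lambda>_. D))" by (rule sets.top)
      have "prob_space (PiM {..<n} (\<lambda>_. D))" by (rule prob_space_PiM) (rule probD)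
      then show "1 \<le> measure (PiM {..<n} (\<lambda>_. D)) (space (PiM {..<n} (\<lambda>_. D)))"
        by (simp add: prob_space.prob_space)
    next
      fix S assume "S \<in> space (PiM {..<n} (\<lambda>_. D))"
      then have S: "\<forall>i<n. S i \<in> (\<lambda>(t, j). xv T t j) ` ({..<T} \<times> {..<h})"
        unfolding space_PiM spD A_def by (auto simp: PiE_iff)
      obtain What where W: "What \<in> hyp_ball k m W0"
        "\<forall>W\<in>hyp_ball k m W0. emp_risk k m l n S What \<le> emp_risk k m l n S W"
        "(1/80) * sqrt (real (s + 1) / real n) \<le> pop_risk k m l D What"
        using erm_part[OF gc n1 sn h1 T_def Tm th_def S] unfolding W0_def l_def D_def A_def by blast
      show "\<exists>What\<in>hyp_ball k m W0.
         (\<forall>W\<in>hyp_ball k m W0. emp_risk k m l n S What \<le> emp_risk k m l n S W) \<and>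
         (\<exists>Wstar\<in>hyp_ball k m W0. (\<forall>W\<in>hyp_ball k m W0. pop_risk k m l D Wstar \<le> pop_risk k m l D W) \<and>
            e \<le> pop_risk k m l D What - pop_risk k m l D Wstar)"
      proof (rule bexI[of _ What])
        show "What \<in> hyp_ball k m W0" by (rule W(1))
        show "(\<forall>W\<in>hyp_ball k m W0. emp_risk k m l n S What \<le> emp_risk k m l n S W) \<and>
         (\<exists>Wstar\<in>hyp_ball k m W0. (\<forall>W\<in>hyp_ball k m W0. pop_risk k m l D Wstar \<le> pop_risk k m l D W) \<and>
            e \<le> pop_risk k m l D What - pop_risk k m l D Wstar)"
        proof (intro conjI)
          show "\<forall>W\<in>hyp_ball k m W0. emp_risk k m l n S What \<le> emp_risk k m l n S W" by (rule W(2))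
          show "\<exists>Wstar\<in>hyp_ball k m W0. (\<forall>W\<in>hyp_ball k m W0. pop_risk k m l D Wstar \<le> pop_risk k m l D W) \<and>
            e \<le> pop_risk k m l D What - pop_risk k m l D Wstar"
          proof (rule bexI[of _ W0])
            show "W0 \<in> hyp_ball k m W0" by (rule W0ball)
            show "(\<forall>W\<in>hyp_ball k m W0. pop_risk k m l D W0 \<le> pop_risk k m l D W) \<and>
              e \<le> pop_risk k m l D What - pop_risk k m l D W0"
              using pop0 popnn W(3) e by simp
          qed
        qed
      qed
    qed
  qed
qed

theorem theorem1:
  shows "\<exists>(c::real) (a::real) (p0::real) (c1::real) (c2::real).
    c > 0 \<and> a \<ge> 0 \<and> p0 > 0 \<and> c1 > 0 \<and> c2 > 0 \<and>
    (\<forall>k n :: nat. 1 \<le> k \<longrightarrow> k \<le> n \<longrightarrow>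
      (\<exists>m::nat. c1 * real n \<le> real m \<and> real m \<le> c2 * real n \<and>
       (\<exists>W0 l D.
          W0 \<in> mats k m \<and>
          convex_loss k l \<and> lipschitz1_loss k l \<and>
          prob_space D \<and>
          (\<forall>x\<in>space D. x \<in> vecs m \<and> enorm m x \<le> 1) \<and>
          (\<forall>W\<in>hyp_ball k m W0. integrable D (\<lambda>x. l (mv k m W x))) \<and>
          (\<exists>E \<in> sets (PiM {..<n} (\<lambda>_. D)).
             measure (PiM {..<n} (\<lambda>_. D)) E \<ge> p0 \<and>
             (\<forall>S\<in>E.
                \<exists>What \<in> hyp_ball k m W0.
                  (\<forall>W\<in>hyp_ball k m W0. emp_risk k m l n S What \<le> emp_risk k m l n S W) \<and>
                  (\<exists>Wstar \<in> hyp_ball k m W0.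
                     (\<forall>W\<in>hyp_ball k m W0. pop_risk k m l D Wstar \<le> pop_risk k m l D W) \<and>
                     pop_risk k m l D What - pop_risk k m l D Wstar
                       \<ge> c * sqrt (real k / real n) / (1 + ln (real n)) powr a))))))"
proof (rule exI[of _ "1 / (80 * sqrt 704)"], rule exI[of _ "0::real"], rule exI[of _ "1::real"], rule exI[of _ "5::real"], rule exI[of _ "5::real"], intro conjI allI impI)
  show "0 < 1 / (80 * sqrt (704::real))" by simp
  show "(0::real) \<le> 0" by simp
  show "(0::real) < 1" by simp
  show "(0::real) < 5" by simp
  show "(0::real) < 5" by simp
next
  fix k n :: nat assume k1: "1 \<le> k" and kn: "k \<le> n"
  have n1: "1 \<le> n" using k1 kn by simp
  define e where "e = 1 / (80 * sqrt 704) * sqrt (real k / real n) / (1 + ln (real n)) powr 0"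
  have "0 < 1 + ln (real n)" using n1 by (simp add: add_pos_nonneg)
  then have e_eq: "e = (1/80) * sqrt (real k / (704 * real n))"
    unfolding e_def by (simp add: real_sqrt_divide real_sqrt_mult field_simps)
  have key: "e \<le> (1/80) * sqrt (real (s + 1) / real n)" if "real k \<le> 704 * real (s + 1)" for s :: nat
  proof -
    have "real k / (704 * real n) \<le> real (s + 1) / real n"
      using that n1 by (simp add: field_simps)
    then show ?thesis unfolding e_eq by simp
  qed
  have G: "goal_inst k n (5 * n) e"
  proof (cases "705 \<le> k")
    case True
    define s where "s = (k - 1) div 64"
    have bound: "real k \<le> 704 * real (s + 1)"
    proof -
      define r where "r = (k - 1) mod 64"
      have e1: "k - 1 = 64 * s + r" unfolding s_def r_def by simp
      have e2: "r < 64" unfolding r_def by simp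
      have e3: "k = 64 * s + r + 1" using e1 True by simp
      have "k \<le> 704 * s + 704" using e2 e3 by linarith
      then have "real k \<le> real (704 * s + 704)" by (simp only: of_nat_le_iff)
      then show ?thesis by simp
    qed
    have sle: "s \<le> k - 1" unfolding s_def by (rule div_le_dividend)
    have sk: "s + 1 \<le> n" using sle kn True by simp
    have hk: "k - 1 \<le> n" using kn by simp
    have h1': "1 \<le> k - 1" using True by simp
    show ?thesis
      by (rule generic[OF binary_goodcode[OF True, folded s_def] n1 sk hk h1' key[OF bound]])
  next
    case False
    show ?thesis
    proof (rule generic[OF fallback_goodcode[OF k1] n1 _ _ _ key])
      show "0 + 1 \<le> n" using n1 by simp
      show "1 \<le> n" using n1 by simp
      show "(1::nat) \<le> 1" by simp
      show "real k \<le> 704 * real (0 + 1)" using False by simp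
    qed
  qed
  show "\<exists>m::nat. 5 * real n \<le> real m \<and> real m \<le> 5 * real n \<and>
       (\<exists>W0 l D.
          W0 \<in> mats k m \<and>
          convex_loss k l \<and> lipschitz1_loss k l \<and>
          prob_space D \<and>
          (\<forall>x\<in>space D. x \<in> vecs m \<and> enorm m x \<le> 1) \<and>
          (\<forall>W\<in>hyp_ball k m W0. integrable D (\<lambda>x. l (mv k m W x))) \<and>
          (\<exists>E \<in> sets (PiM {..<n} (\<lambda>_. D)).
             measure (PiM {..<n} (\<lambda>_. D)) E \<ge> 1 \<and>
             (\<forall>S\<in>E.
                \<exists>What \<in> hyp_ball k m W0.
                  (\<forall>W\<in>hyp_ball k m W0. emp_risk k m l n S What \<le> emp_risk k m l n S W) \<and>
                  (\<exists>Wstar \<in> hyp_ball k m W0.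
                     (\<forall>W\<in>hyp_ball k m W0. pop_risk k m l D Wstar \<le> pop_risk k m l D W) \<and>
                     pop_risk k m l D What - pop_risk k m l D Wstar
                       \<ge> 1 / (80 * sqrt 704) * sqrt (real k / real n) / (1 + ln (real n)) powr 0))))"
    using G unfolding goal_inst_def e_def by (intro exI[of _ "5 * n"] conjI) simp_all
qed


end
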